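(* Let $\Gamma\subset\mathbb{R}^3$ be a smooth surface with unit normal $\mathbf{n}$ (regarded as a column vector) whose mean curvature $H$ satisfies $\sup_\Gamma |H|<\infty$. Let $\mathbf{v}$ and $\mathbf{f}$ be two vector fields on $\Gamma$, and let $u$ and $g$ be two scalar functions on $\Gamma$ (with $u$ of class $C^2$ and $\mathbf{v}$ of class $C^1$). Then, on $\Gamma$, \begin{align*} \|\nabla_\Gamma u-\mathbf{f}\| &\leq \|\nabla \overline{u} - \overline{\mathbf{f}}\|+\|\langle\mathbf{n},\nabla \overline{u}\rangle\|,\\ \|\nabla_\Gamma \cdot\mathbf{v}-g\| &\leq \|\nabla \cdot\overline{\mathbf{v}} - \overline{g}\|+\|\mathbf{n}^\top \nabla \overline{\mathbf{v}}\,\mathbf{n}\|,\\ \|\Delta_\Gamma u - g\| &\leq C\big(\|\Delta \overline{u} -\overline{g}\|+\|\langle\mathbf{n},\nabla \overline{u}\rangle\|+\|\mathbf{n}^\top\nabla^2 \overline{u}\, \mathbf{n}\|\big), \end{align*} where $C=\max(1,2\sup_\Gamma|H|)$, $\|\cdot\|$ is the $L^2(\Gamma)$ norm of scalar or vector functions, $\nabla^2$ is the Hessian, and $\nabla\overline{\mathbf{v}}$ is the Jacobian matrix of $\overline{\mathbf{v}}$.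
   Context: $\nabla$, $\nabla\cdot$, $\Delta$ denote the ordinary gradient, divergence and Laplacian in $\mathbb{R}^3$, and $\langle\cdot,\cdot\rangle$ the Euclidean inner product. For a function $w$ on $\Gamma$, $\overline{w}$ denotes its smooth extension to a neighborhood $U$ of $\Gamma$ with $\overline{w}|_\Gamma=w$ and $\overline{w}$ constant along the normal direction $\mathbf{n}$ at each point of $\Gamma$ (for vector fields, componentwise). Surface gradient: for $u\in C^1(\Gamma)$, $\nabla_\Gamma u=\nabla\overline{u}-\langle\nabla\overline{u},\mathbf{n}\rangle\mathbf{n}=(D_1u,D_2u,D_3u)$. Surface divergence of $\mathbf{v}=(v_1,v_2,v_3)\in (C^1)^3$: $\nabla_\Gamma\cdot\mathbf{v}=D_1v_1+D_2v_2+D_3v_3$. Laplace–Beltrami operator: $\Delta_\Gamma u=\nabla_\Gamma\cdot\nabla_\Gamma u$ for $u\in C^2$. The mean curvature $H$ is taken with the convention $\nabla\cdot\mathbf{n}=-2H$. *)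

theory Defs
  imports "HOL-Analysis.Analysis"
begin

type_synonym R3 = "real ^ 3"

definition pd :: "3 \<Rightarrow> (R3 \<Rightarrow> real) \<Rightarrow> R3 \<Rightarrow> real" where
  "pd i f x = frechet_derivative f (at x) (axis i 1)"

definition grad :: "(R3 \<Rightarrow> real) \<Rightarrow> R3 \<Rightarrow> R3" where
  "grad f x = (\<chi> i. pd i f x)"

definition divg :: "(R3 \<Rightarrow> R3) \<Rightarrow> R3 \<Rightarrow> real" where
  "divg v x = (\<Sum>i\<in>UNIV. pd i (\<lambda>y. v y $ i) x)"

definition lap :: "(R3 \<Rightarrow> real) \<Rightarrow> R3 \<Rightarrow> real" where
  "lap f x = (\<Sum>i\<in>UNIV. pd i (pd i f) x)"

definition jac_form :: "(R3 \<Rightarrow> R3) \<Rightarrow> R3 \<Rightarrow> R3 \<Rightarrow> real" where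
  "jac_form v m x = (\<Sum>i\<in>UNIV. \<Sum>j\<in>UNIV. m $ i * pd j (\<lambda>y. v y $ i) x * m $ j)"

definition hess_form :: "(R3 \<Rightarrow> real) \<Rightarrow> R3 \<Rightarrow> R3 \<Rightarrow> real" where
  "hess_form f m x = (\<Sum>i\<in>UNIV. \<Sum>j\<in>UNIV. m $ i * pd j (pd i f) x * m $ j)"

fun Ck :: "nat \<Rightarrow> (R3 \<Rightarrow> real) \<Rightarrow> R3 set \<Rightarrow> bool" where
  "Ck 0 f U = continuous_on U f"
| "Ck (Suc k) f U = ((\<forall>x\<in>U. f differentiable (at x)) \<and> (\<forall>i. Ck k (pd i f) U))"

definition smooth_on :: "R3 set \<Rightarrow> (R3 \<Rightarrow> real) \<Rightarrow> bool" where
  "smooth_on U f \<longleftrightarrow> (\<forall>k. Ck k f U)"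

definition smooth_surface :: "R3 set \<Rightarrow> (R3 \<Rightarrow> R3) \<Rightarrow> bool" where
  "smooth_surface \<Gamma> n \<longleftrightarrow>
     (\<forall>p\<in>\<Gamma>. \<exists>V \<phi>. open V \<and> p \<in> V \<and> smooth_on V \<phi> \<and>
        (\<forall>x\<in>V. grad \<phi> x \<noteq> 0) \<and> \<Gamma> \<inter> V = {x\<in>V. \<phi> x = 0} \<and>
        (\<forall>x\<in>\<Gamma> \<inter> V. n x = (1 / norm (grad \<phi> x)) *\<^sub>R grad \<phi> x))"

definition is_normal_ext :: "R3 set \<Rightarrow> (R3 \<Rightarrow> R3) \<Rightarrow> (R3 \<Rightarrow> real) \<Rightarrow> (R3 \<Rightarrow> real) \<Rightarrow> bool" where
  "is_normal_ext \<Gamma> n w W \<longleftrightarrow>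
     (\<exists>U. open U \<and> \<Gamma> \<subseteq> U \<and> (\<forall>y\<in>U. W differentiable (at y)) \<and>
        (\<forall>x\<in>\<Gamma>. W x = w x) \<and>
        (\<forall>x\<in>\<Gamma>. \<exists>e>0. \<forall>t. \<bar>t\<bar> < e \<longrightarrow> W (x + t *\<^sub>R n x) = w x))"

definition nrm_ext :: "R3 set \<Rightarrow> (R3 \<Rightarrow> R3) \<Rightarrow> (R3 \<Rightarrow> real) \<Rightarrow> (R3 \<Rightarrow> real)" where
  "nrm_ext \<Gamma> n w = (SOME W. is_normal_ext \<Gamma> n w W)"

definition surf_grad :: "R3 set \<Rightarrow> (R3 \<Rightarrow> R3) \<Rightarrow> (R3 \<Rightarrow> real) \<Rightarrow> R3 \<Rightarrow> R3" where
  "surf_grad \<Gamma> n w x = grad (nrm_ext \<Gamma> n w) x - (grad (nrm_ext \<Gamma> n w) x \<bullet> n x) *\<^sub>R n x"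

definition surf_div :: "R3 set \<Rightarrow> (R3 \<Rightarrow> R3) \<Rightarrow> (R3 \<Rightarrow> R3) \<Rightarrow> R3 \<Rightarrow> real" where
  "surf_div \<Gamma> n v x = (\<Sum>i\<in>UNIV. surf_grad \<Gamma> n (\<lambda>y. v y $ i) x $ i)"

definition lap_beltrami :: "R3 set \<Rightarrow> (R3 \<Rightarrow> R3) \<Rightarrow> (R3 \<Rightarrow> real) \<Rightarrow> R3 \<Rightarrow> real" where
  "lap_beltrami \<Gamma> n w x = surf_div \<Gamma> n (surf_grad \<Gamma> n w) x"

(* mean curvature, convention \<nabla>\<cdot>\<overline>n = -2H *)
definition mean_curv :: "R3 set \<Rightarrow> (R3 \<Rightarrow> R3) \<Rightarrow> R3 \<Rightarrow> real" where
  "mean_curv \<Gamma> n x = - (1/2) * (\<Sum>i\<in>UNIV. pd i (nrm_ext \<Gamma> n (\<lambda>y. n y $ i)) x)"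

definition H2_delta :: "real \<Rightarrow> R3 set \<Rightarrow> ennreal" where
  "H2_delta \<delta> A = (INF C \<in> {C :: nat \<Rightarrow> R3 set. A \<subseteq> (\<Union>i. C i) \<and>
        (\<forall>i. bounded (C i) \<and> diameter (C i) < \<delta>)}.
        (\<Sum>i. ennreal (pi / 4 * (diameter (C i))\<^sup>2)))"

definition H2_outer :: "R3 set \<Rightarrow> ennreal" where
  "H2_outer A = (SUP \<delta> \<in> {0<..}. H2_delta \<delta> A)"

definition surface_measure :: "R3 set \<Rightarrow> R3 measure" where
  "surface_measure \<Gamma> = measure_of \<Gamma> (sets (restrict_space borel \<Gamma>)) H2_outer"

definition L2norm :: "R3 set \<Rightarrow> (R3 \<Rightarrow> 'a::real_normed_vector) \<Rightarrow> ennreal" where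
  "L2norm \<Gamma> F = (let I = (\<integral>\<^sup>+ x. ennreal ((norm (F x))\<^sup>2) \<partial>surface_measure \<Gamma>)
                  in if I = \<infinity> then \<infinity> else ennreal (sqrt (enn2real I)))"

end

theory Submission
  imports Defs "HOL-Analysis.Analysis"
begin

lemma pd_from_deriv: "(f has_derivative D) (at x) \<Longrightarrow> pd i f x = D (axis i 1)"
  unfolding pd_def using frechet_derivative_at by metis

lemma grad_from_deriv: "(f has_derivative D) (at x) \<Longrightarrow> grad f x = (\<chi> i. D (axis i 1))"
  unfolding grad_def using pd_from_deriv by metis

lemma linear_R3_expand:
  fixes D :: "R3 \<Rightarrow> real"
  assumes "linear D"
  shows "D h = (\<chi> i. D (axis i 1)) \<bullet> h"
proof -
  have "h = (\<Sum>i\<in>UNIV. h $ i *\<^sub>R axis i 1)"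
    by (simp add: vec_eq_iff axis_def sum.delta' if_distrib cong: if_cong)
  then have "D h = D (\<Sum>i\<in>UNIV. h $ i *\<^sub>R axis i 1)" by simp
  also have "\<dots> = (\<Sum>i\<in>UNIV. h $ i * D (axis i 1))"
    using assms by (simp add: linear_sum linear_scale)
  also have "\<dots> = (\<chi> i. D (axis i 1)) \<bullet> h"
    by (simp add: inner_vec_def mult.commute)
  finally show ?thesis .
qed

lemma deriv_grad:
  assumes "f differentiable (at x)"
  shows "(f has_derivative (\<lambda>h. grad f x \<bullet> h)) (at x)"
proof -
  from assms have d: "(f has_derivative frechet_derivative f (at x)) (at x)"
    using frechet_derivative_works by blast
  have "linear (frechet_derivative f (at x))"
    using d has_derivative_linear by blast
  then have "frechet_derivative f (at x) = (\<lambda>h. grad f x \<bullet> h)"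
    using linear_R3_expand grad_from_deriv[OF d] by (intro ext) metis
  with d show ?thesis by simp
qed

lemma has_derivative_vec3:
  fixes f :: "R3 \<Rightarrow> R3"
  assumes "\<And>i. ((\<lambda>y. f y $ i) has_derivative (\<lambda>h. f' h $ i)) (at x)"
  shows "(f has_derivative f') (at x)"
proof -
  have "\<forall>b\<in>Basis. ((\<lambda>y. f y \<bullet> b) has_derivative (\<lambda>h. f' h \<bullet> b)) (at x)"
    using assms by (auto simp: Basis_vec_def inner_axis)
  then show ?thesis using has_derivative_componentwise_within[of f f' x UNIV] by simp
qed

lemma Ck2D:
  assumes "Ck 2 f U"
  shows "\<And>x. x \<in> U \<Longrightarrow> f differentiable (at x)"
    "\<And>x i. x \<in> U \<Longrightarrow> pd i f differentiable (at x)"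
    "\<And>i. continuous_on U (pd i f)"
    "\<And>i j. continuous_on U (pd j (pd i f))"
  using assms by (auto simp: numeral_2_eq_2 intro!: continuous_at_imp_continuous_on differentiable_imp_continuous_within)

lemma Ck1D:
  assumes "Ck 1 f U"
  shows "\<And>x. x \<in> U \<Longrightarrow> f differentiable (at x)"
    "\<And>i. continuous_on U (pd i f)"
  using assms by auto

lemma smoothD:
  assumes "smooth_on U f"
  shows "Ck 2 f U" "Ck 3 f U"
  using assms unfolding smooth_on_def by auto

lemma Ck3D:
  assumes "Ck 3 f U"
  shows "Ck 2 (pd i f) U"
  using assms by (simp add: numeral_3_eq_3 numeral_2_eq_2)

lemma amgm_aux:
  fixes k t b l :: real
  assumes "0 \<le> k" "k \<le> t + b" "0 \<le> t" "0 \<le> b" "0 < l"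
  shows "k\<^sup>2 \<le> (1 + l) * t\<^sup>2 + (1 + 1/l) * b\<^sup>2"
proof -
  have "k\<^sup>2 \<le> (t + b)\<^sup>2" using assms by (intro power_mono) auto
  moreover have "2 * t * b \<le> l * t\<^sup>2 + b\<^sup>2 / l"
  proof -
    have "0 \<le> (l * t - b)\<^sup>2" by simp
    then have "2 * l * t * b \<le> l\<^sup>2 * t\<^sup>2 + b\<^sup>2" by (simp add: power2_eq_square algebra_simps)
    then have "(2 * t * b) * l \<le> (l * t\<^sup>2 + b\<^sup>2 / l) * l"
      using assms by (simp add: power2_eq_square algebra_simps)
    then show ?thesis using assms by simp
  qed
  ultimately show ?thesis by (simp add: power2_eq_square algebra_simps)
qed

lemma mink_gen:
  fixes h a b :: "'x \<Rightarrow> real"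
  assumes le: "\<forall>x\<in>space M. \<bar>h x\<bar> \<le> \<bar>a x\<bar> + b x"
    and bm: "b \<in> borel_measurable M" and bnn: "\<forall>x\<in>space M. 0 \<le> b x" and l: "0 < l"
  shows "(\<integral>\<^sup>+x. ennreal ((h x)\<^sup>2) \<partial>M)
     \<le> ennreal (1 + l) * (\<integral>\<^sup>+x. ennreal ((a x)\<^sup>2) \<partial>M) + ennreal (1 + 1/l) * (\<integral>\<^sup>+x. ennreal ((b x)\<^sup>2) \<partial>M)"
  unfolding nn_integral_def[of M "\<lambda>x. ennreal ((h x)\<^sup>2)"]
proof (rule SUP_least, clarify)
  fix g assume sg: "simple_function M g" and gle: "g \<le> (\<lambda>x. ennreal ((h x)\<^sup>2))"
  have gm: "g \<in> borel_measurable M" using sg by (rule borel_measurable_simple_function)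
  define k where "k x = sqrt (enn2real (g x))" for x
  define t where "t x = max 0 (k x - b x)" for x
  have km: "k \<in> borel_measurable M" unfolding k_def using gm by measurable
  have tm: "t \<in> borel_measurable M" unfolding t_def using km bm by measurable
  have gk: "g x = ennreal ((k x)\<^sup>2)" for x
  proof -
    have "g x \<le> ennreal ((h x)\<^sup>2)" using gle by (simp add: le_fun_def)
    then have "g x < top" using le_less_trans by fastforce
    then show ?thesis unfolding k_def by (simp add: ennreal_enn2real_if)
  qed
  have kh: "k x \<le> \<bar>h x\<bar>" for x
  proof -
    have "g x \<le> ennreal ((h x)\<^sup>2)" using gle by (simp add: le_fun_def)
    then have "(k x)\<^sup>2 \<le> (h x)\<^sup>2" unfolding gk by (auto simp: ennreal_le_iff2)
    then show ?thesis unfolding k_def using abs_le_square_iff by (metis abs_of_nonneg real_sqrt_ge_zero enn2real_nonneg)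
  qed
  have pt: "(k x)\<^sup>2 \<le> (1 + l) * (t x)\<^sup>2 + (1 + 1/l) * (b x)\<^sup>2" if "x \<in> space M" for x
    using amgm_aux[of "k x" "t x" "b x" l] kh[of x] le that bnn l unfolding t_def k_def by auto
  have ta: "(t x)\<^sup>2 \<le> (a x)\<^sup>2" if "x \<in> space M" for x
  proof -
    have "t x \<le> \<bar>a x\<bar>" using kh[of x] le that unfolding t_def by force
    moreover have "0 \<le> t x" unfolding t_def by simp
    ultimately show ?thesis by (metis abs_le_square_iff abs_of_nonneg)
  qed
  have "integral\<^sup>S M g = (\<integral>\<^sup>+x. g x \<partial>M)" using nn_integral_eq_simple_integral[OF sg] by simp
  also have "\<dots> = (\<integral>\<^sup>+x. ennreal ((k x)\<^sup>2) \<partial>M)" by (simp add: gk)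
  also have "\<dots> \<le> (\<integral>\<^sup>+x. ennreal (1 + l) * ennreal ((t x)\<^sup>2) + ennreal (1 + 1/l) * ennreal ((b x)\<^sup>2) \<partial>M)"
    apply (rule nn_integral_mono)
    using pt l by (simp add: ennreal_mult[symmetric] ennreal_plus[symmetric] del: ennreal_plus)
  also have "\<dots> = ennreal (1 + l) * (\<integral>\<^sup>+x. ennreal ((t x)\<^sup>2) \<partial>M) + ennreal (1 + 1/l) * (\<integral>\<^sup>+x. ennreal ((b x)\<^sup>2) \<partial>M)"
    using tm bm by (simp add: nn_integral_add nn_integral_cmult)
  also have "\<dots> \<le> ennreal (1 + l) * (\<integral>\<^sup>+x. ennreal ((a x)\<^sup>2) \<partial>M) + ennreal (1 + 1/l) * (\<integral>\<^sup>+x. ennreal ((b x)\<^sup>2) \<partial>M)"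
    by (intro add_mono mult_left_mono nn_integral_mono) (auto simp: ta)
  finally show "integral\<^sup>S M g \<le> ennreal (1 + l) * (\<integral>\<^sup>+x. ennreal ((a x)\<^sup>2) \<partial>M) + ennreal (1 + 1/l) * (\<integral>\<^sup>+x. ennreal ((b x)\<^sup>2) \<partial>M)" .
qed

lemma real_core:
  fixes x1 x2 x3 :: real
  assumes "0 \<le> x2" "0 \<le> x3" "\<And>l. 0 < l \<Longrightarrow> x1 \<le> (1 + l) * x2 + (1 + 1/l) * x3"
  shows "sqrt x1 \<le> sqrt x2 + sqrt x3"
proof -
  have sq: "x1 \<le> (sqrt x2 + sqrt x3)\<^sup>2"
  proof (cases "x2 = 0 \<or> x3 = 0")
    case True
    show ?thesis
    proof (rule ccontr)
      assume c: "\<not> ?thesis"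
      show False
      proof (cases "x2 = 0")
        case True
        with c assms have c': "x1 > x3" by (simp add: power2_eq_square)
        define l where "l = 2 * (x3 + 1) / (x1 - x3)"
        have lp: "l > 0" unfolding l_def using c' assms by simp
        have "x3 / l = ((x1 - x3) / 2) * (x3 / (x3 + 1))" unfolding l_def using c' assms by (simp add: field_simps)
        also have "\<dots> \<le> ((x1 - x3) / 2) * 1"
          using c' assms by (intro mult_left_mono) auto
        finally have "x3 / l \<le> x1 / 2 - x3 / 2" by (simp add: diff_divide_distrib)
        moreover have "x1 \<le> x3 + x3 / l" using assms(3)[OF lp] True by (simp add: algebra_simps)
        ultimately show False using c' by linarith
      next
        case False
        then have x3: "x3 = 0" using \<open>x2 = 0 \<or> x3 = 0\<close> by simp
        with c assms have c': "x1 > x2" by (simp add: power2_eq_square)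
        define l where "l = (x1 - x2) / (2 * (x2 + 1))"
        have lp: "l > 0" unfolding l_def using c' assms by simp
        have "l * x2 = ((x1 - x2) / 2) * (x2 / (x2 + 1))" unfolding l_def using c' assms by (simp add: field_simps)
        also have "\<dots> \<le> ((x1 - x2) / 2) * 1"
          using c' assms by (intro mult_left_mono) auto
        finally have "l * x2 \<le> x1 / 2 - x2 / 2" by (simp add: diff_divide_distrib)
        moreover have "x1 \<le> x2 + l * x2" using assms(3)[OF lp] x3 by (simp add: algebra_simps)
        ultimately show False using c' by linarith
      qed
    qed
  next
    case False
    then have p2: "sqrt x2 > 0" and p3: "sqrt x3 > 0" using assms by auto
    define l where "l = sqrt x3 / sqrt x2"
    have lp: "l > 0" unfolding l_def using p2 p3 by simp
    have "(1 + l) * x2 + (1 + 1/l) * x3 = (sqrt x2 + sqrt x3)\<^sup>2"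
      unfolding l_def using p2 p3 assms
      by (simp add: field_simps power2_eq_square)
    then show ?thesis using assms(3)[OF lp] by simp
  qed
  have "sqrt x1 \<le> sqrt ((sqrt x2 + sqrt x3)\<^sup>2)" using sq by (rule real_sqrt_le_mono)
  then show ?thesis using assms(1,2) by simp
qed

definition Lsq :: "ennreal \<Rightarrow> ennreal" where
  "Lsq I = (if I = \<infinity> then \<infinity> else ennreal (sqrt (enn2real I)))"

lemma L2norm_Lsq: "L2norm \<Gamma> F = Lsq (\<integral>\<^sup>+ x. ennreal ((norm (F x))\<^sup>2) \<partial>surface_measure \<Gamma>)"
  unfolding L2norm_def Lsq_def Let_def by simp

lemma Lsq_tri:
  assumes "\<And>l. 0 < l \<Longrightarrow> I1 \<le> ennreal (1 + l) * I2 + ennreal (1 + 1/l) * I3"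
  shows "Lsq I1 \<le> Lsq I2 + Lsq I3"
proof (cases "I2 = \<infinity> \<or> I3 = \<infinity>")
  case True
  then show ?thesis unfolding Lsq_def by auto
next
  case False
  then obtain x2 x3 where x2: "I2 = ennreal x2" "0 \<le> x2" and x3: "I3 = ennreal x3" "0 \<le> x3"
    by (metis ennreal_cases infinity_ennreal_def)
  have "I1 \<le> ennreal 2 * I2 + ennreal 2 * I3" using assms[of 1] by simp
  moreover have "ennreal 2 * I2 + ennreal 2 * I3 < top" using x2 x3 by (simp add: ennreal_mult_less_top)
  ultimately have "I1 \<noteq> \<infinity>" by (metis infinity_ennreal_def le_less_trans less_irrefl)
  then obtain x1 where x1: "I1 = ennreal x1" "0 \<le> x1" by (metis ennreal_cases infinity_ennreal_def)
  have "x1 \<le> (1 + l) * x2 + (1 + 1/l) * x3" if "0 < l" for l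
  proof -
    have "ennreal x1 \<le> ennreal ((1 + l) * x2 + (1 + 1/l) * x3)"
      using assms[OF that] x1 x2 x3 that by (simp add: ennreal_mult[symmetric] ennreal_plus[symmetric] del: ennreal_plus)
    then show ?thesis using x2 x3 that by (subst (asm) ennreal_le_iff) auto
  qed
  then have "sqrt x1 \<le> sqrt x2 + sqrt x3" using real_core x2 x3 by blast
  then show ?thesis unfolding Lsq_def using x1 x2 x3 by (simp add: ennreal_plus[symmetric] del: ennreal_plus)
qed

lemma space_surf: "space (surface_measure \<Gamma>) = \<Gamma>"
  and sets_surf: "sets (surface_measure \<Gamma>) = sets (restrict_space borel \<Gamma>)"
proof -
  have sub: "sets (restrict_space borel \<Gamma>) \<subseteq> Pow \<Gamma>"
    using sets.space_closed[of "restrict_space borel \<Gamma>"] by (simp add: space_restrict_space)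
  show "space (surface_measure \<Gamma>) = \<Gamma>" unfolding surface_measure_def
    using sub by (simp add: space_measure_of_conv)
  have "sets (surface_measure \<Gamma>) = sigma_sets \<Gamma> (sets (restrict_space borel \<Gamma>))"
    unfolding surface_measure_def using sub by (simp add: sets_measure_of)
  also have "\<dots> = sets (restrict_space borel \<Gamma>)"
    using sets.sigma_sets_eq[of "restrict_space borel \<Gamma>"] by (simp add: space_restrict_space)
  finally show "sets (surface_measure \<Gamma>) = sets (restrict_space borel \<Gamma>)" .
qed

lemma cont_meas:
  assumes "continuous_on \<Gamma> f"
  shows "f \<in> borel_measurable (surface_measure \<Gamma>)"
  using borel_measurable_continuous_on_restrict[OF assms] measurable_cong_sets[OF sets_surf refl]
  by blast

lemma L2_tri:
  fixes F A :: "R3 \<Rightarrow> 'a::real_normed_vector" and B :: "R3 \<Rightarrow> 'b::real_normed_vector"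
  assumes le: "\<forall>x\<in>\<Gamma>. norm (F x) \<le> norm (A x) + norm (B x)"
    and bm: "(\<lambda>x. norm (B x)) \<in> borel_measurable (surface_measure \<Gamma>)"
  shows "L2norm \<Gamma> F \<le> L2norm \<Gamma> A + L2norm \<Gamma> B"
  unfolding L2norm_Lsq
  apply (rule Lsq_tri)
  apply (rule mink_gen[of "surface_measure \<Gamma>" "\<lambda>x. norm (F x)" "\<lambda>x. norm (A x)" "\<lambda>x. norm (B x)", simplified])
  using le bm by (auto simp: space_surf)

lemma L2_scale:
  fixes B :: "R3 \<Rightarrow> real"
  assumes c: "0 \<le> c" and bm: "(\<lambda>x. norm (B x)) \<in> borel_measurable (surface_measure \<Gamma>)"
  shows "L2norm \<Gamma> (\<lambda>x. c * B x) = ennreal c * L2norm \<Gamma> B"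
proof -
  have m: "(\<lambda>x. ennreal ((norm (B x))\<^sup>2)) \<in> borel_measurable (surface_measure \<Gamma>)"
    using bm by measurable
  have "(\<integral>\<^sup>+x. ennreal ((norm (c * B x))\<^sup>2) \<partial>surface_measure \<Gamma>)
      = (\<integral>\<^sup>+x. ennreal (c\<^sup>2) * ennreal ((norm (B x))\<^sup>2) \<partial>surface_measure \<Gamma>)"
    using c by (intro nn_integral_cong) (simp add: ennreal_mult[symmetric] power_mult_distrib abs_mult)
  also have "\<dots> = ennreal (c\<^sup>2) * (\<integral>\<^sup>+x. ennreal ((norm (B x))\<^sup>2) \<partial>surface_measure \<Gamma>)"
    using m by (rule nn_integral_cmult)
  finally have eq: "(\<integral>\<^sup>+x. ennreal ((norm (c * B x))\<^sup>2) \<partial>surface_measure \<Gamma>) = ennreal (c\<^sup>2) * (\<integral>\<^sup>+x. ennreal ((norm (B x))\<^sup>2) \<partial>surface_measure \<Gamma>)" .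
  show ?thesis
    unfolding L2norm_Lsq eq
  proof (cases "(\<integral>\<^sup>+x. ennreal ((norm (B x))\<^sup>2) \<partial>surface_measure \<Gamma>) = \<infinity>")
    case True
    then show "Lsq (ennreal (c\<^sup>2) * (\<integral>\<^sup>+x. ennreal ((norm (B x))\<^sup>2) \<partial>surface_measure \<Gamma>)) = ennreal c * Lsq (\<integral>\<^sup>+x. ennreal ((norm (B x))\<^sup>2) \<partial>surface_measure \<Gamma>)"
      using c unfolding Lsq_def by (cases "c = 0") (auto simp: ennreal_mult_top)
  next
    case False
    then obtain y where y: "(\<integral>\<^sup>+x. ennreal ((norm (B x))\<^sup>2) \<partial>surface_measure \<Gamma>) = ennreal y" "0 \<le> y"
      by (metis ennreal_cases infinity_ennreal_def)
    show "Lsq (ennreal (c\<^sup>2) * (\<integral>\<^sup>+x. ennreal ((norm (B x))\<^sup>2) \<partial>surface_measure \<Gamma>)) = ennreal c * Lsq (\<integral>\<^sup>+x. ennreal ((norm (B x))\<^sup>2) \<partial>surface_measure \<Gamma>)"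
      unfolding y Lsq_def using c y(2)
      by (simp add: ennreal_mult[symmetric] real_sqrt_mult)
  qed
qed

lemma div_aux: "(c::real) \<noteq> 0 \<Longrightarrow> k / (4 * c) * c = k / 4" by simp

lemma tangent_min_aux:
  fixes \<phi> g :: "R3 \<Rightarrow> real" and a \<sigma> z :: R3
  assumes V: "open V" "z \<in> V" and cont: "continuous_on V \<phi>"
    and dphi: "(\<phi> has_derivative (\<lambda>h. a \<bullet> h)) (at z)" and a: "a \<noteq> 0" and phz: "\<phi> z = 0"
    and dg: "(g has_derivative g') (at z)"
    and min: "\<forall>w\<in>V. \<phi> w = 0 \<longrightarrow> g z \<le> g w"
    and orth: "a \<bullet> \<sigma> = 0" and neg: "g' \<sigma> < 0"
  shows False
proof -
  have lin: "linear g'" using dg has_derivative_linear by blast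
  define k where "k = - g' \<sigma>"
  have k: "k > 0" using neg k_def by simp
  have sne: "\<sigma> \<noteq> 0" using neg lin linear_0 by force
  define \<delta> where "\<delta> = k / (4 * (\<bar>g' a\<bar> + 1))"
  have \<delta>: "\<delta> > 0" using k \<delta>_def by simp
  have \<delta>ga: "\<delta> * \<bar>g' a\<bar> \<le> k / 4"
  proof -
    have "\<delta> * \<bar>g' a\<bar> \<le> \<delta> * (\<bar>g' a\<bar> + 1)" using \<delta> by simp
    also have "\<dots> = k / 4"
    proof -
      have c: "\<bar>g' a\<bar> + 1 \<noteq> 0" using abs_ge_zero[of "g' a"] by linarith
      show ?thesis unfolding \<delta>_def by (rule div_aux[OF c])
    qed
    finally show ?thesis .
  qed
  define M where "M = norm \<sigma> + \<delta> * norm a"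
  have M: "M > 0" unfolding M_def using sne \<delta> by (simp add: add_pos_nonneg)
  have aa: "a \<bullet> a > 0" using a by simp
  define e1 where "e1 = \<delta> * (a \<bullet> a) / (2 * M)"
  have e1: "e1 > 0" unfolding e1_def using \<delta> aa M by simp
  define e2 where "e2 = k / (4 * M)"
  have e2: "e2 > 0" unfolding e2_def using k M by simp
  obtain d1 where d1: "d1 > 0" "\<forall>y. norm (y - z) < d1 \<longrightarrow> norm (\<phi> y - \<phi> z - a \<bullet> (y - z)) \<le> e1 * norm (y - z)"
    using dphi e1 unfolding has_derivative_at_alt by blast
  obtain d2 where d2: "d2 > 0" "\<forall>y. norm (y - z) < d2 \<longrightarrow> norm (g y - g z - g' (y - z)) \<le> e2 * norm (y - z)"
    using dg e2 unfolding has_derivative_at_alt by blast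
  obtain r where r: "r > 0" "ball z r \<subseteq> V" using V open_contains_ball by blast
  define s where "s = min d1 (min d2 r) / (2 * M)"
  have s: "s > 0" unfolding s_def using d1 d2 r M by simp
  have sM: "s * M < d1" "s * M < d2" "s * M < r"
    unfolding s_def using d1 d2 r M by (auto simp: min_def)
  define w where "w t = z + s *\<^sub>R \<sigma> + t *\<^sub>R a" for t
  have wn: "norm (w t - z) \<le> s * M" if "\<bar>t\<bar> \<le> s * \<delta>" for t
  proof -
    have "norm (w t - z) = norm (s *\<^sub>R \<sigma> + t *\<^sub>R a)" unfolding w_def by (simp add: algebra_simps)
    also have "\<dots> \<le> s * norm \<sigma> + \<bar>t\<bar> * norm a" using s by (metis abs_of_pos norm_scaleR norm_triangle_ineq)
    also have "\<dots> \<le> s * norm \<sigma> + (s * \<delta>) * norm a" using that by (simp add: mult_right_mono)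
    also have "\<dots> = s * M" unfolding M_def by (simp add: algebra_simps)
    finally show ?thesis .
  qed
  have winV: "w t \<in> V" if "\<bar>t\<bar> \<le> s * \<delta>" for t
    using wn[OF that] sM r by (auto simp: dist_norm norm_minus_commute)
  have aw: "a \<bullet> (w t - z) = t * (a \<bullet> a)" for t
    unfolding w_def using orth by (simp add: algebra_simps inner_add_right)
  have phi_est: "\<bar>\<phi> (w t) - t * (a \<bullet> a)\<bar> \<le> s * \<delta> * (a \<bullet> a) / 2" if "\<bar>t\<bar> \<le> s * \<delta>" for t
  proof -
    have "norm (w t - z) < d1" using wn[OF that] sM by simp
    then have "\<bar>\<phi> (w t) - t * (a \<bullet> a)\<bar> \<le> e1 * norm (w t - z)" using d1 phz aw by force
    also have "\<dots> \<le> e1 * (s * M)" using wn[OF that] e1 by (simp add: mult_left_mono)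
    also have "\<dots> = s * \<delta> * (a \<bullet> a) / 2" unfolding e1_def using M by (simp add: field_simps)
    finally show ?thesis .
  qed
  have sd: "s * \<delta> > 0" using s \<delta> by simp
  have P: "s * \<delta> * (a \<bullet> a) > 0" using sd aa by simp
  have p1: "\<phi> (w (s * \<delta>)) \<ge> 0"
    using phi_est[of "s * \<delta>"] sd P unfolding abs_le_iff by linarith
  have mm: "- (s * \<delta>) * (a \<bullet> a) = - (s * \<delta> * (a \<bullet> a))" by simp
  have p2: "\<phi> (w (- (s * \<delta>))) \<le> 0"
    using phi_est[of "- (s * \<delta>)"] sd P unfolding abs_le_iff mm by linarith
  have cw: "continuous_on {- (s * \<delta>)..s * \<delta>} (\<lambda>t. \<phi> (w t))"
  proof (rule continuous_on_compose2[OF cont])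
    show "continuous_on {- (s * \<delta>)..s * \<delta>} w" unfolding w_def by (intro continuous_intros)
    show "w ` {- (s * \<delta>)..s * \<delta>} \<subseteq> V" using winV by auto
  qed
  obtain t0 where t0: "- (s * \<delta>) \<le> t0" "t0 \<le> s * \<delta>" "\<phi> (w t0) = 0"
    using IVT'[of "\<lambda>t. \<phi> (w t)" "- (s * \<delta>)" 0 "s * \<delta>", OF p2 p1 _ cw] sd by auto
  have t0a: "\<bar>t0\<bar> \<le> s * \<delta>" using t0 by auto
  have "g (w t0) - g z \<le> g' (w t0 - z) + e2 * norm (w t0 - z)"
  proof -
    have "norm (w t0 - z) < d2" using wn[OF t0a] sM by simp
    then have "norm (g (w t0) - g z - g' (w t0 - z)) \<le> e2 * norm (w t0 - z)" using d2 by blast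
    then show ?thesis by simp
  qed
  also have "g' (w t0 - z) = s * g' \<sigma> + t0 * g' a"
    unfolding w_def using lin by (simp add: linear_add linear_scale)
  also have "e2 * norm (w t0 - z) \<le> e2 * (s * M)" using wn[OF t0a] e2 by (simp add: mult_left_mono)
  also have "e2 * (s * M) = s * k / 4" unfolding e2_def using M by (simp add: field_simps)
  finally have "g (w t0) - g z \<le> s * g' \<sigma> + t0 * g' a + s * k / 4" by simp
  moreover have "t0 * g' a \<le> s * \<delta> * \<bar>g' a\<bar>"
  proof -
    have "t0 * g' a \<le> \<bar>t0 * g' a\<bar>" by simp
    also have "\<dots> = \<bar>t0\<bar> * \<bar>g' a\<bar>" by (rule abs_mult)
    also have "\<dots> \<le> s * \<delta> * \<bar>g' a\<bar>" using t0a by (rule mult_right_mono) simp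
    finally show ?thesis .
  qed
  moreover have "s * \<delta> * \<bar>g' a\<bar> \<le> s * (k / 4)" using \<delta>ga s by (simp add: mult_left_mono mult.assoc)
  moreover have "s * g' \<sigma> = - (s * k)" unfolding k_def by simp
  ultimately have "g (w t0) - g z \<le> - (s * k) / 2" by linarith
  moreover have "s * k > 0" using s k by simp
  ultimately have "g (w t0) < g z" by linarith
  moreover have "g z \<le> g (w t0)" using min winV[OF t0a] t0(3) by blast
  ultimately show False by simp
qed

lemma tangent_min:
  fixes \<phi> g :: "R3 \<Rightarrow> real" and a \<tau> z :: R3
  assumes V: "open V" "z \<in> V" and cont: "continuous_on V \<phi>"
    and dphi: "(\<phi> has_derivative (\<lambda>h. a \<bullet> h)) (at z)" and a: "a \<noteq> 0" and phz: "\<phi> z = 0"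
    and dg: "(g has_derivative g') (at z)"
    and min: "\<forall>w\<in>V. \<phi> w = 0 \<longrightarrow> g z \<le> g w"
    and orth: "a \<bullet> \<tau> = 0"
  shows "g' \<tau> = 0"
proof (rule ccontr)
  assume ne: "g' \<tau> \<noteq> 0"
  have lin: "linear g'" using dg has_derivative_linear by blast
  show False
  proof (cases "g' \<tau> < 0")
    case True
    then show False using tangent_min_aux[OF V cont dphi a phz dg min orth] by blast
  next
    case False
    then have "g' (- \<tau>) < 0" using ne lin by (simp add: linear_neg)
    moreover have "a \<bullet> (- \<tau>) = 0" using orth by simp
    ultimately show False using tangent_min_aux[OF V cont dphi a phz dg min] by blast
  qed
qed

definition Hm :: "(R3 \<Rightarrow> real) \<Rightarrow> R3 \<Rightarrow> R3 \<Rightarrow> R3" where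
  "Hm \<phi> z h = (\<chi> i. grad (pd i \<phi>) z \<bullet> h)"

lemma gradG_deriv:
  assumes "\<And>i. pd i \<phi> differentiable (at z)"
  shows "(grad \<phi> has_derivative Hm \<phi> z) (at z)"
proof (rule has_derivative_vec3)
  fix i
  have "(pd i \<phi> has_derivative (\<lambda>h. grad (pd i \<phi>) z \<bullet> h)) (at z)"
    using deriv_grad assms by blast
  then show "((\<lambda>y. grad \<phi> y $ i) has_derivative (\<lambda>h. Hm \<phi> z h $ i)) (at z)"
    unfolding grad_def[of \<phi>] Hm_def by simp
qed

lemma grad_cont:
  assumes "\<And>j. continuous_on V (pd j f)"
  shows "continuous_on V (grad f)"
  unfolding grad_def[abs_def] using assms by (intro continuous_on_vec_lambda) auto

definition Fm :: "(R3 \<Rightarrow> real) \<Rightarrow> R3 \<times> real \<Rightarrow> R3 \<times> real" where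
  "Fm \<phi> x = (fst x + snd x *\<^sub>R grad \<phi> (fst x), \<phi> (fst x))"

definition DFm :: "(R3 \<Rightarrow> real) \<Rightarrow> R3 \<times> real \<Rightarrow> R3 \<times> real \<Rightarrow> R3 \<times> real" where
  "DFm \<phi> x h = (fst h + (snd x *\<^sub>R Hm \<phi> (fst x) (fst h) + snd h *\<^sub>R grad \<phi> (fst x)), grad \<phi> (fst x) \<bullet> fst h)"

lemma Fm_deriv:
  assumes phi: "Ck 2 \<phi> V" and x: "fst x \<in> V"
  shows "(Fm \<phi> has_derivative DFm \<phi> x) (at x)"
proof -
  have dfst: "((\<lambda>x. fst x) has_derivative (\<lambda>h. fst h)) (at x)"
    by (rule has_derivative_fst[OF has_derivative_ident])
  have dsnd: "((\<lambda>x. snd x) has_derivative (\<lambda>h. snd h)) (at x)"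
    by (rule has_derivative_snd[OF has_derivative_ident])
  have dG: "((\<lambda>x. grad \<phi> (fst x)) has_derivative (\<lambda>h. Hm \<phi> (fst x) (fst h))) (at x)"
    using has_derivative_compose[OF dfst gradG_deriv[of \<phi> "fst x"]] Ck2D(2)[OF phi x] by blast
  have dphi: "((\<lambda>x. \<phi> (fst x)) has_derivative (\<lambda>h. grad \<phi> (fst x) \<bullet> fst h)) (at x)"
    using has_derivative_compose[OF dfst deriv_grad[of \<phi> "fst x"]] Ck2D(1)[OF phi x] by blast
  have dsc: "((\<lambda>x. snd x *\<^sub>R grad \<phi> (fst x)) has_derivative
      (\<lambda>h. snd x *\<^sub>R Hm \<phi> (fst x) (fst h) + snd h *\<^sub>R grad \<phi> (fst x))) (at x)"
    using has_derivative_scaleR[OF dsnd dG] by simp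
  have "((\<lambda>x. (fst x + snd x *\<^sub>R grad \<phi> (fst x), \<phi> (fst x))) has_derivative
      (\<lambda>h. (fst h + (snd x *\<^sub>R Hm \<phi> (fst x) (fst h) + snd h *\<^sub>R grad \<phi> (fst x)), grad \<phi> (fst x) \<bullet> fst h))) (at x)"
    by (intro has_derivative_Pair has_derivative_add dfst dsc dphi)
  then show ?thesis unfolding Fm_def[abs_def] DFm_def[abs_def] by simp
qed

lemma DFm_cont:
  assumes phi: "Ck 2 \<phi> V"
  shows "continuous_on (V \<times> UNIV) (\<lambda>x. DFm \<phi> x c)"
proof -
  have cG: "continuous_on V (grad \<phi>)" using grad_cont Ck2D(3)[OF phi] by blast
  have cH: "continuous_on V (\<lambda>z. Hm \<phi> z (fst c))"
    unfolding Hm_def using grad_cont Ck2D(4)[OF phi]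
    by (intro continuous_on_vec_lambda continuous_intros) auto
  have cG': "continuous_on (V \<times> UNIV) (\<lambda>x. grad \<phi> (fst x))"
    by (rule continuous_on_compose2[OF cG]) (auto intro!: continuous_intros)
  have cH': "continuous_on (V \<times> UNIV) (\<lambda>x. Hm \<phi> (fst x) (fst c))"
    by (rule continuous_on_compose2[OF cH, where f=fst]) (auto intro!: continuous_intros)
  show ?thesis unfolding DFm_def
    using cG' cH' by (intro continuous_intros) auto
qed

lemma DFm_bl:
  assumes phi: "Ck 2 \<phi> V" and x: "fst x \<in> V"
  shows "bounded_linear (DFm \<phi> x)"
  using Fm_deriv[OF assms] has_derivative_bounded_linear by blast

lemma ift_local:
  fixes \<phi> :: "R3 \<Rightarrow> real"
  assumes V: "open V" and phi: "Ck 2 \<phi> V" and gnz: "\<forall>x\<in>V. grad \<phi> x \<noteq> 0" and p: "p \<in> V"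
  obtains U' W g where "open U'" "U' \<subseteq> V \<times> UNIV" "(p,0) \<in> U'" "open W" "(p, \<phi> p) \<in> W"
    "\<forall>x\<in>U'. Fm \<phi> x \<in> W \<and> g (Fm \<phi> x) = x"
    "\<forall>y\<in>W. g y \<in> U' \<and> Fm \<phi> (g y) = y"
    "\<forall>y\<in>W. g differentiable (at y)"
proof -
  define f' where "f' x = Blinfun (DFm \<phi> x)" for x
  have f'a: "blinfun_apply (f' x) = DFm \<phi> x" if "x \<in> V \<times> UNIV" for x
    unfolding f'_def using DFm_bl[OF phi] that by (auto simp: bounded_linear_Blinfun_apply)
  have derf: "(Fm \<phi> has_derivative blinfun_apply (f' x)) (at x)" if "x \<in> V \<times> UNIV" for x
    using Fm_deriv[OF phi] f'a[OF that] that by auto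
  have contf: "continuous_on (V \<times> UNIV) f'"
  proof (rule continuous_on_blinfun_componentwise)
    fix i :: "R3 \<times> real"
    show "continuous_on (V \<times> UNIV) (\<lambda>x. blinfun_apply (f' x) i)"
      using DFm_cont[OF phi, of i] by (rule continuous_on_eq) (simp add: f'a)
  qed
  define G where "G = grad \<phi> p"
  have G: "G \<noteq> 0" using gnz p G_def by auto
  define c where "c = G \<bullet> G"
  have c: "c \<noteq> 0" using G c_def by simp
  define ifun where "ifun y = (fst y - ((G \<bullet> fst y - snd y) / c) *\<^sub>R G, (G \<bullet> fst y - snd y) / c)" for y :: "R3 \<times> real"
  have lin: "linear ifun"
    unfolding ifun_def by (rule linearI) (auto simp: algebra_simps inner_add_right inner_diff_right add_divide_distrib diff_divide_distrib scaleR_add_left[symmetric] simp del: scaleR_add_left)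
  have bl: "bounded_linear ifun" using lin linear_conv_bounded_linear by blast
  define invf where "invf = Blinfun ifun"
  have inv: "invf o\<^sub>L f' (p, 0) = id_blinfun"
  proof (rule blinfun_eqI)
    fix h :: "R3 \<times> real"
    have "blinfun_apply (f' (p, 0)) h = (fst h + snd h *\<^sub>R G, G \<bullet> fst h)"
      using f'a[of "(p,0)"] p unfolding DFm_def G_def by simp
    moreover have "ifun (fst h + snd h *\<^sub>R G, G \<bullet> fst h) = h"
      unfolding ifun_def using c by (simp add: c_def inner_add_right prod_eq_iff)
    ultimately show "blinfun_apply (invf o\<^sub>L f' (p, 0)) h = blinfun_apply id_blinfun h"
      unfolding invf_def using bl by (simp add: bounded_linear_Blinfun_apply)
  qed
  have opn: "open (V \<times> (UNIV :: real set))" using V by (simp add: open_Times)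
  have pin: "(p,0) \<in> V \<times> UNIV" using p by simp
  show ?thesis
  proof (rule inverse_function_theorem[OF opn derf contf pin inv])
    fix U' W g g'
    assume U': "open U'" "U' \<subseteq> V \<times> UNIV" "(p,0) \<in> U'" "open W" "Fm \<phi> (p,0) \<in> W"
      "homeomorphism U' W (Fm \<phi>) g" and dg: "\<And>y. y \<in> W \<Longrightarrow> (g has_derivative (g' y)) (at y)"
  have "Fm \<phi> (p,0) = (p, \<phi> p)" unfolding Fm_def by simp
  show thesis
  proof (rule that[OF U'(1,2,3,4)])
    show "(p, \<phi> p) \<in> W" using U'(5) \<open>Fm \<phi> (p,0) = (p, \<phi> p)\<close> by simp
    show "\<forall>x\<in>U'. Fm \<phi> x \<in> W \<and> g (Fm \<phi> x) = x"
      using U'(6) unfolding homeomorphism_def by auto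
    show "\<forall>y\<in>W. g y \<in> U' \<and> Fm \<phi> (g y) = y"
      using U'(6) unfolding homeomorphism_def by auto
    show "\<forall>y\<in>W. g differentiable (at y)"
      using dg unfolding differentiable_def by blast
  qed
  qed
qed

lemma orth_decomp:
  fixes d G :: R3
  assumes G: "G \<noteq> 0" and h: "\<And>\<tau>. G \<bullet> \<tau> = 0 \<Longrightarrow> d \<bullet> \<tau> = 0"
  shows "d = ((d \<bullet> G) / (G \<bullet> G)) *\<^sub>R G"
proof -
  define c where "c = (d \<bullet> G) / (G \<bullet> G)"
  define \<tau> where "\<tau> = d - c *\<^sub>R G"
  have GG: "G \<bullet> G \<noteq> 0" using G by simp
  have o: "G \<bullet> \<tau> = 0" unfolding \<tau>_def c_def using GG by (simp add: inner_diff_right inner_commute)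
  then have "d \<bullet> \<tau> = 0" by (rule h)
  then have "\<tau> \<bullet> \<tau> = 0" using o unfolding \<tau>_def by (simp add: inner_diff_left inner_commute)
  then have "\<tau> = 0" by simp
  then show ?thesis unfolding \<tau>_def c_def by simp
qed

lemma dist_sq_deriv:
  fixes y z :: R3
  shows "((\<lambda>w. (w - y) \<bullet> (w - y)) has_derivative (\<lambda>h. 2 * ((z - y) \<bullet> h))) (at z)"
proof -
  have d: "((\<lambda>w. w - y) has_derivative (\<lambda>h. h)) (at z)"
    using has_derivative_diff[OF has_derivative_ident has_derivative_const[of y]] by simp
  show ?thesis using has_derivative_inner[OF d d] by (simp add: inner_commute)
qed

lemma loc_proj:
  fixes \<phi> :: "R3 \<Rightarrow> real"
  assumes V: "open V" and phi: "Ck 2 \<phi> V" and gnz: "\<forall>x\<in>V. grad \<phi> x \<noteq> 0"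
    and GV: "\<Gamma> \<inter> V = {x\<in>V. \<phi> x = 0}" and p: "p \<in> \<Gamma>" "p \<in> V"
  obtains r \<pi> where "r > 0"
    "\<forall>y\<in>ball p r. \<pi> differentiable (at y)"
    "\<forall>y\<in>ball p r. \<pi> y \<in> \<Gamma> \<inter> V"
    "\<forall>y\<in>ball p r. \<exists>z\<in>\<Gamma>. \<forall>w\<in>\<Gamma>. dist y z \<le> dist y w"
    "\<forall>y\<in>ball p r. \<forall>z\<in>\<Gamma>. (\<forall>w\<in>\<Gamma>. dist y z \<le> dist y w) \<longrightarrow> z = \<pi> y"
    "\<exists>e>0. \<forall>t. \<bar>t\<bar> < e \<longrightarrow> p + t *\<^sub>R ((1 / norm (grad \<phi> p)) *\<^sub>R grad \<phi> p) \<in> ball p r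
        \<and> \<pi> (p + t *\<^sub>R ((1 / norm (grad \<phi> p)) *\<^sub>R grad \<phi> p)) = p"
proof -
  have php: "\<phi> p = 0" using GV p by auto
  obtain U' W g where U': "open U'" "U' \<subseteq> V \<times> UNIV" "(p,0) \<in> U'" "open W" "(p, \<phi> p) \<in> W"
    and inj: "\<forall>x\<in>U'. Fm \<phi> x \<in> W \<and> g (Fm \<phi> x) = x"
    and sur: "\<forall>y\<in>W. g y \<in> U' \<and> Fm \<phi> (g y) = y"
    and dg: "\<forall>y\<in>W. g differentiable (at y)"
    using ift_local[OF V phi gnz p(2)] by blast
  define \<pi> where "\<pi> y = fst (g (y, 0))" for y
  define B where "B = (\<lambda>y::R3. (y, 0::real)) -` W"
  have oB: "open B" unfolding B_def using U'(4) by (intro open_vimage) (auto intro!: continuous_intros)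
  have pB: "p \<in> B" unfolding B_def using U'(5) php by simp
  obtain rB where rB: "rB > 0" "ball p rB \<subseteq> B" using oB pB open_contains_ball by blast
  obtain \<rho> where \<rho>: "\<rho> > 0" "ball (p, 0) \<rho> \<subseteq> U'" using U'(1,3) open_contains_ball by blast
  define Gp where "Gp = grad \<phi> p"
  have Gp: "norm Gp > 0" using gnz p Gp_def by auto
  have cG: "continuous_on V (grad \<phi>)" using grad_cont Ck2D(3)[OF phi] by blast
  then have "isCont (grad \<phi>) p" using V p continuous_on_eq_continuous_at by blast
  then obtain \<rho>2 where \<rho>2: "\<rho>2 > 0" "\<forall>z. dist z p < \<rho>2 \<longrightarrow> dist (grad \<phi> z) Gp < norm Gp / 2"
    unfolding continuous_at_eps_delta Gp_def using Gp Gp_def by (metis half_gt_zero)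
  have Gz: "norm (grad \<phi> z) \<ge> norm Gp / 2" if "dist z p < \<rho>2" for z
  proof -
    have "dist (grad \<phi> z) Gp < norm Gp / 2" using \<rho>2 that by blast
    then show ?thesis using norm_triangle_ineq3[of Gp "grad \<phi> z"]
      by (simp add: dist_norm norm_minus_commute)
  qed
  obtain R where R: "R > 0" "cball p R \<subseteq> V" using V p open_contains_cball by blast
  define r where "r = min (min rB (R/2)) (min (\<rho>2/2) (min (\<rho>/4) (\<rho> * norm Gp / 8)))"
  have r: "r > 0" unfolding r_def using rB R \<rho>2 \<rho> Gp by simp
  have rle: "r \<le> rB" "r \<le> R/2" "r \<le> \<rho>2/2" "r \<le> \<rho>/4" "r \<le> \<rho> * norm Gp / 8" unfolding r_def by auto
  have contphi: "continuous_on V \<phi>"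
    using Ck2D(1)[OF phi] differentiable_imp_continuous_within by (intro continuous_at_imp_continuous_on) blast
  have yW: "(y, 0) \<in> W" if "y \<in> ball p r" for y
  proof -
    have "y \<in> ball p rB" using that rle by auto
    then have "y \<in> B" using rB(2) by blast
    then show ?thesis unfolding B_def by simp
  qed
  have piV: "\<pi> y \<in> \<Gamma> \<inter> V" if "y \<in> ball p r" for y
  proof -
    have "g (y,0) \<in> U'" "Fm \<phi> (g (y,0)) = (y,0)" using sur yW[OF that] by auto
    then have "\<pi> y \<in> V" "\<phi> (\<pi> y) = 0" using U'(2) unfolding \<pi>_def Fm_def by (auto simp: prod_eq_iff)
    then show ?thesis using GV by blast
  qed
  have pidiff: "\<pi> differentiable (at y)" if "y \<in> ball p r" for y
  proof -
    have d1: "(\<lambda>y::R3. (y, 0::real)) differentiable (at y)"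
      by (intro differentiable_Pair differentiable_ident differentiable_const)
    have d2: "g differentiable (at (y, 0))" using dg yW[OF that] by blast
    have "(g \<circ> (\<lambda>y. (y, 0))) differentiable (at y)" by (rule differentiable_chain_at[OF d1 d2])
    moreover have "fst differentiable (at ((g \<circ> (\<lambda>y. (y, 0))) y))"
      by (simp add: bounded_linear_fst bounded_linear_imp_differentiable)
    ultimately have "(fst \<circ> (g \<circ> (\<lambda>y. (y, 0)))) differentiable (at y)" by (rule differentiable_chain_at)
    then show ?thesis unfolding \<pi>_def[abs_def] o_def by simp
  qed
  define K where "K = {x \<in> cball p R. \<phi> x = 0}"
  have Kc: "closed K" unfolding K_def
    using continuous_on_subset[OF contphi R(2)] by (intro continuous_closed_preimage_constant) auto
  have KG: "K = \<Gamma> \<inter> cball p R" unfolding K_def using GV R(2) by auto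
  have pK: "p \<in> K" using KG p R by auto
  have exist: "\<exists>z\<in>\<Gamma>. \<forall>w\<in>\<Gamma>. dist y z \<le> dist y w" if y: "y \<in> ball p r" for y
  proof -
    obtain z where z: "z \<in> K" "\<And>w. w \<in> K \<Longrightarrow> dist y z \<le> dist y w"
      using distance_attains_inf[OF Kc] pK by blast
    have yp: "dist y p < r" using y by (simp add: dist_commute)
    have "dist y z \<le> dist y w" if w: "w \<in> \<Gamma>" for w
    proof (cases "w \<in> K")
      case True then show ?thesis using z by blast
    next
      case False
      then have "dist p w > R" using KG w by (auto simp: dist_commute)
      then have "dist y w > R - r" using dist_triangle[of p w y] yp by (simp add: dist_commute)
      moreover have "dist y z \<le> dist y p" using z pK by blast
      ultimately show ?thesis using yp rle by linarith
    qed
    then show ?thesis using z KG by blast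
  qed
  have uniq: "z = \<pi> y" if y: "y \<in> ball p r" and z: "z \<in> \<Gamma>" and zmin: "\<forall>w\<in>\<Gamma>. dist y z \<le> dist y w" for y z
  proof -
    have yp: "dist y p < r" using y by (simp add: dist_commute)
    have yz: "dist y z < r" using zmin p(1) yp by (meson le_less_trans)
    have zp: "dist z p < 2 * r" using dist_triangle[of z p y] yz yp by (simp add: dist_commute)
    have zV: "z \<in> V" using zp rle R(2) by (auto simp: dist_commute)
    have phz: "\<phi> z = 0" using GV z zV by auto
    define Gz where "Gz = grad \<phi> z"
    have Gzn: "norm Gz \<ge> norm Gp / 2" unfolding Gz_def using Gz zp rle by simp
    have Gz0: "Gz \<noteq> 0" using Gzn Gp by auto
    have dphi: "(\<phi> has_derivative (\<lambda>h. Gz \<bullet> h)) (at z)"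
      unfolding Gz_def using deriv_grad Ck2D(1)[OF phi zV] by blast
    have orth: "(z - y) \<bullet> \<tau> = 0" if "Gz \<bullet> \<tau> = 0" for \<tau>
    proof -
      have "2 * ((z - y) \<bullet> \<tau>) = 0"
      proof (rule tangent_min[OF V zV contphi dphi Gz0 phz dist_sq_deriv[of y z] _ that])
        show "\<forall>w\<in>V. \<phi> w = 0 \<longrightarrow> (z - y) \<bullet> (z - y) \<le> (w - y) \<bullet> (w - y)"
        proof (intro ballI impI)
          fix w assume "w \<in> V" "\<phi> w = 0"
          then have "w \<in> \<Gamma>" using GV by auto
          then have "dist y z \<le> dist y w" using zmin by blast
          then have "norm (z - y) \<le> norm (w - y)" by (simp add: dist_norm norm_minus_commute)
          then have "(norm (z - y))\<^sup>2 \<le> (norm (w - y))\<^sup>2" by (simp add: power_mono)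
          then show "(z - y) \<bullet> (z - y) \<le> (w - y) \<bullet> (w - y)" by (simp add: power2_norm_eq_inner)
        qed
      qed
      then show ?thesis by simp
    qed
    define c where "c = ((y - z) \<bullet> Gz) / (Gz \<bullet> Gz)"
    have yzc: "y - z = c *\<^sub>R Gz" unfolding c_def
      using orth_decomp[OF Gz0, of "y - z"] orth by (metis inner_minus_left minus_diff_eq neg_equal_0_iff_equal)
    have cn: "\<bar>c\<bar> * norm Gz = dist y z" using yzc by (metis dist_norm norm_scaleR)
    have cb: "\<bar>c\<bar> \<le> 2 * r / norm Gp"
    proof -
      have "\<bar>c\<bar> * (norm Gp / 2) \<le> \<bar>c\<bar> * norm Gz" using mult_left_mono[OF Gzn abs_ge_zero[of c]] by simp
      then have "\<bar>c\<bar> * (norm Gp / 2) \<le> r" using cn yz by linarith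
      then show ?thesis using Gp by (simp add: field_simps)
    qed
    have cr: "\<bar>c\<bar> < \<rho> / 2"
    proof -
      have eq: "\<rho> / 4 * norm Gp = 2 * (\<rho> * norm Gp / 8)" by simp
      have "2 * r \<le> \<rho> / 4 * norm Gp" unfolding eq using rle(5) by linarith
      then have "2 * r / norm Gp \<le> \<rho> / 4" by (subst pos_divide_le_eq[OF Gp])
      then show ?thesis using cb \<rho> by linarith
    qed
    have inU: "(z, c) \<in> U'"
    proof -
      have "dist (z, c) (p, 0) = sqrt ((dist z p)\<^sup>2 + (dist c 0)\<^sup>2)" by (rule dist_Pair_Pair)
      also have "\<dots> \<le> sqrt ((dist z p + dist c 0)\<^sup>2)"
        by (rule real_sqrt_le_mono) (simp add: power2_sum)
      also have "\<dots> = dist z p + dist c 0" by simp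
      also have "\<dots> < \<rho>" using zp rle cr by simp
      finally show ?thesis using \<rho> by (auto simp: dist_commute)
    qed
    have "Fm \<phi> (z, c) = (y, 0)" unfolding Fm_def using yzc phz Gz_def by (simp add: algebra_simps)
    then have "g (y, 0) = (z, c)" using inj inU by metis
    then show ?thesis unfolding \<pi>_def by simp
  qed
  have normal: "\<exists>e>0. \<forall>t. \<bar>t\<bar> < e \<longrightarrow> p + t *\<^sub>R ((1 / norm Gp) *\<^sub>R Gp) \<in> ball p r
        \<and> \<pi> (p + t *\<^sub>R ((1 / norm Gp) *\<^sub>R Gp)) = p"
  proof (intro exI conjI allI impI)
    define e where "e = min r (\<rho> * norm Gp / 2)"
    show "e > 0" unfolding e_def using r \<rho> Gp by simp
    fix t assume t: "\<bar>t\<bar> < e"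
    have "norm (t *\<^sub>R ((1 / norm Gp) *\<^sub>R Gp)) = \<bar>t\<bar>" using Gp by simp
    then show "p + t *\<^sub>R ((1 / norm Gp) *\<^sub>R Gp) \<in> ball p r"
      using t unfolding e_def by (simp add: dist_norm)
    have tl: "\<bar>t / norm Gp\<bar> < \<rho>" 
    proof -
      have "\<bar>t\<bar> < \<rho> * norm Gp" using t \<rho> Gp unfolding e_def by (simp add: min_def split: if_splits) 
      then show ?thesis using Gp by (simp add: field_simps)
    qed
    have inU: "(p, t / norm Gp) \<in> U'"
      using \<rho> tl by (auto simp: dist_Pair_Pair dist_real_def)
    have "Fm \<phi> (p, t / norm Gp) = (p + t *\<^sub>R ((1 / norm Gp) *\<^sub>R Gp), 0)"
      unfolding Fm_def Gp_def using php by simp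
    then have "g (p + t *\<^sub>R ((1 / norm Gp) *\<^sub>R Gp), 0) = (p, t / norm Gp)" using inj inU by metis
    then show "\<pi> (p + t *\<^sub>R ((1 / norm Gp) *\<^sub>R Gp)) = p" unfolding \<pi>_def by simp
  qed
  show ?thesis
    apply (rule that[of r \<pi>])
    using r pidiff piV exist uniq normal unfolding Gp_def by blast+
qed

lemma Ck_mono: "Ck k f U \<Longrightarrow> U' \<subseteq> U \<Longrightarrow> Ck k f U'"
proof (induction k arbitrary: f)
  case 0
  then show ?case using continuous_on_subset by simp
next
  case (Suc k)
  then show ?case by auto
qed

lemma chart:
  assumes surf: "smooth_surface \<Gamma> n" and p: "p \<in> \<Gamma>"
  obtains V \<phi> where "open V" "p \<in> V" "Ck 2 \<phi> V" "\<forall>x\<in>V. grad \<phi> x \<noteq> 0"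
    "\<Gamma> \<inter> V = {x\<in>V. \<phi> x = 0}" "\<forall>x\<in>\<Gamma> \<inter> V. n x = (1 / norm (grad \<phi> x)) *\<^sub>R grad \<phi> x"
proof -
  obtain V \<phi> where V: "open V" "p \<in> V" "smooth_on V \<phi>" "\<forall>x\<in>V. grad \<phi> x \<noteq> 0"
    "\<Gamma> \<inter> V = {x\<in>V. \<phi> x = 0}" "\<forall>x\<in>\<Gamma> \<inter> V. n x = (1 / norm (grad \<phi> x)) *\<^sub>R grad \<phi> x"
  proof -
    have "\<exists>V \<phi>. open V \<and> p \<in> V \<and> smooth_on V \<phi> \<and>
        (\<forall>x\<in>V. grad \<phi> x \<noteq> 0) \<and> \<Gamma> \<inter> V = {x\<in>V. \<phi> x = 0} \<and>
        (\<forall>x\<in>\<Gamma> \<inter> V. n x = (1 / norm (grad \<phi> x)) *\<^sub>R grad \<phi> x)"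
      using surf p unfolding smooth_surface_def by (rule bspec)
    then show ?thesis using that by (elim exE conjE) 
  qed
  show ?thesis using that[OF V(1,2) smoothD(1)[OF V(3)] V(4,5,6)] .
qed

lemma chart_sub:
  assumes surf: "smooth_surface \<Gamma> n" and p: "p \<in> \<Gamma>" and Oo: "open Oo" "p \<in> Oo"
  obtains V \<phi> where "open V" "p \<in> V" "V \<subseteq> Oo" "Ck 2 \<phi> V" "\<forall>x\<in>V. grad \<phi> x \<noteq> 0"
    "\<Gamma> \<inter> V = {x\<in>V. \<phi> x = 0}" "\<forall>x\<in>\<Gamma> \<inter> V. n x = (1 / norm (grad \<phi> x)) *\<^sub>R grad \<phi> x"
proof -
  obtain V \<phi> where V: "open V" "p \<in> V" "Ck 2 \<phi> V" "\<forall>x\<in>V. grad \<phi> x \<noteq> 0"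
    "\<Gamma> \<inter> V = {x\<in>V. \<phi> x = 0}" "\<forall>x\<in>\<Gamma> \<inter> V. n x = (1 / norm (grad \<phi> x)) *\<^sub>R grad \<phi> x"
    using chart[OF surf p] by blast
  show ?thesis
  proof (rule that[of "V \<inter> Oo" \<phi>])
    show "Ck 2 \<phi> (V \<inter> Oo)" using Ck_mono V(3) by blast
  qed (use V Oo in auto)
qed

definition cp :: "R3 set \<Rightarrow> R3 \<Rightarrow> R3" where
  "cp \<Gamma> y = (SOME z. z \<in> \<Gamma> \<and> (\<forall>w\<in>\<Gamma>. dist y z \<le> dist y w))"

lemma normal_ext_exists:
  assumes surf: "smooth_surface \<Gamma> n"
    and loc: "\<forall>p\<in>\<Gamma>. \<exists>Oo Z. open Oo \<and> p \<in> Oo \<and> (\<forall>y\<in>Oo. Z differentiable (at y)) \<and> (\<forall>y\<in>\<Gamma>\<inter>Oo. Z y = w y)"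
  shows "\<exists>W. is_normal_ext \<Gamma> n w W"
proof -
  define Q where "Q = (\<lambda>p r (\<pi>::R3\<Rightarrow>R3) (Z::R3\<Rightarrow>real). r > 0 \<and> (\<forall>y\<in>ball p r. \<pi> differentiable (at y) \<and> \<pi> y \<in> \<Gamma> \<and> Z differentiable (at (\<pi> y)) \<and> Z (\<pi> y) = w (\<pi> y))
      \<and> (\<forall>y\<in>ball p r. \<exists>z\<in>\<Gamma>. \<forall>w\<in>\<Gamma>. dist y z \<le> dist y w)
      \<and> (\<forall>y\<in>ball p r. \<forall>z\<in>\<Gamma>. (\<forall>w\<in>\<Gamma>. dist y z \<le> dist y w) \<longrightarrow> z = \<pi> y)
      \<and> (\<exists>e>0. \<forall>t. \<bar>t\<bar> < e \<longrightarrow> p + t *\<^sub>R n p \<in> ball p r \<and> \<pi> (p + t *\<^sub>R n p) = p))"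
  have "\<exists>r \<pi> Z. Q p r \<pi> Z" if p: "p \<in> \<Gamma>" for p
  proof -
    obtain Oo Z where OZ: "open Oo" "p \<in> Oo" "\<forall>y\<in>Oo. Z differentiable (at y)" "\<forall>y\<in>\<Gamma>\<inter>Oo. Z y = w y"
      using loc p by blast
    obtain V \<phi> where V: "open V" "p \<in> V" "V \<subseteq> Oo" "Ck 2 \<phi> V" "\<forall>x\<in>V. grad \<phi> x \<noteq> 0"
      "\<Gamma> \<inter> V = {x\<in>V. \<phi> x = 0}" "\<forall>x\<in>\<Gamma> \<inter> V. n x = (1 / norm (grad \<phi> x)) *\<^sub>R grad \<phi> x"
      using chart_sub[OF surf p OZ(1,2)] by blast
    obtain r \<pi> where r: "r > 0"
      "\<forall>y\<in>ball p r. \<pi> differentiable (at y)"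
      "\<forall>y\<in>ball p r. \<pi> y \<in> \<Gamma> \<inter> V"
      "\<forall>y\<in>ball p r. \<exists>z\<in>\<Gamma>. \<forall>w\<in>\<Gamma>. dist y z \<le> dist y w"
      "\<forall>y\<in>ball p r. \<forall>z\<in>\<Gamma>. (\<forall>w\<in>\<Gamma>. dist y z \<le> dist y w) \<longrightarrow> z = \<pi> y"
      "\<exists>e>0. \<forall>t. \<bar>t\<bar> < e \<longrightarrow> p + t *\<^sub>R ((1 / norm (grad \<phi> p)) *\<^sub>R grad \<phi> p) \<in> ball p r
        \<and> \<pi> (p + t *\<^sub>R ((1 / norm (grad \<phi> p)) *\<^sub>R grad \<phi> p)) = p"
      using loc_proj[OF V(1,4,5,6) p V(2)] by blast
    have np: "n p = (1 / norm (grad \<phi> p)) *\<^sub>R grad \<phi> p" using V(7) p V(2) by blast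
    have A: "\<forall>y\<in>ball p r. \<pi> differentiable (at y) \<and> \<pi> y \<in> \<Gamma> \<and> Z differentiable (at (\<pi> y)) \<and> Z (\<pi> y) = w (\<pi> y)"
    proof
      fix y assume y: "y \<in> ball p r"
      have "\<pi> y \<in> \<Gamma>" "\<pi> y \<in> Oo" using r(3) y V(3) by auto
      then show "\<pi> differentiable (at y) \<and> \<pi> y \<in> \<Gamma> \<and> Z differentiable (at (\<pi> y)) \<and> Z (\<pi> y) = w (\<pi> y)"
        using r(2) y OZ(3,4) by blast
    qed
    have E: "\<exists>e>0. \<forall>t. \<bar>t\<bar> < e \<longrightarrow> p + t *\<^sub>R n p \<in> ball p r \<and> \<pi> (p + t *\<^sub>R n p) = p"
      using r(6) unfolding np .
    have "Q p r \<pi> Z" unfolding Q_def by (intro conjI) (rule r(1), rule A, rule r(4), rule r(5), rule E)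
    then show ?thesis by blast
  qed
  then have "\<forall>p\<in>\<Gamma>. \<exists>t. Q p (fst t) (fst (snd t)) (snd (snd t))"
  proof (intro ballI)
    fix p assume "p \<in> \<Gamma>"
    then obtain r \<pi> Z where "Q p r \<pi> Z" using \<open>\<And>p. p \<in> \<Gamma> \<Longrightarrow> \<exists>r \<pi> Z. Q p r \<pi> Z\<close> by blast
    then show "\<exists>t. Q p (fst t) (fst (snd t)) (snd (snd t))" by (intro exI[of _ "(r, \<pi>, Z)"]) simp
  qed
  then obtain T where T: "\<forall>p\<in>\<Gamma>. Q p (fst (T p)) (fst (snd (T p))) (snd (snd (T p)))"
    by (rule bchoice_iff[THEN iffD1, elim_format]) blast
  define R where "R p = fst (T p)" for p
  define PI where "PI p = fst (snd (T p))" for p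
  define ZZ where "ZZ p = snd (snd (T p))" for p
  have RPZ: "R p > 0 \<and> (\<forall>y\<in>ball p (R p). PI p differentiable (at y) \<and> PI p y \<in> \<Gamma> \<and> ZZ p differentiable (at (PI p y)) \<and> ZZ p (PI p y) = w (PI p y))
      \<and> (\<forall>y\<in>ball p (R p). \<exists>z\<in>\<Gamma>. \<forall>w\<in>\<Gamma>. dist y z \<le> dist y w)
      \<and> (\<forall>y\<in>ball p (R p). \<forall>z\<in>\<Gamma>. (\<forall>w\<in>\<Gamma>. dist y z \<le> dist y w) \<longrightarrow> z = PI p y)
      \<and> (\<exists>e>0. \<forall>t. \<bar>t\<bar> < e \<longrightarrow> p + t *\<^sub>R n p \<in> ball p (R p) \<and> PI p (p + t *\<^sub>R n p) = p)" if "p \<in> \<Gamma>" for p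
  proof -
    have "Q p (R p) (PI p) (ZZ p)" using bspec[OF T that] unfolding R_def PI_def ZZ_def .
    then show ?thesis unfolding Q_def .
  qed
  have R0: "R p > 0" if "p \<in> \<Gamma>" for p using RPZ[OF that] by (elim conjE)
  have Rd: "PI p differentiable (at y)" "PI p y \<in> \<Gamma>" "ZZ p differentiable (at (PI p y))" "ZZ p (PI p y) = w (PI p y)"
    if "p \<in> \<Gamma>" "y \<in> ball p (R p)" for p y
  proof -
    have "\<forall>y\<in>ball p (R p). PI p differentiable (at y) \<and> PI p y \<in> \<Gamma> \<and> ZZ p differentiable (at (PI p y)) \<and> ZZ p (PI p y) = w (PI p y)"
      using RPZ[OF that(1)] by (elim conjE)
    then have "PI p differentiable (at y) \<and> PI p y \<in> \<Gamma> \<and> ZZ p differentiable (at (PI p y)) \<and> ZZ p (PI p y) = w (PI p y)"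
      using that(2) by (rule bspec)
    then show "PI p differentiable (at y)" "PI p y \<in> \<Gamma>" "ZZ p differentiable (at (PI p y))" "ZZ p (PI p y) = w (PI p y)"
      by auto
  qed
  have Rex: "\<exists>z\<in>\<Gamma>. \<forall>w\<in>\<Gamma>. dist y z \<le> dist y w" if "p \<in> \<Gamma>" "y \<in> ball p (R p)" for p y
  proof -
    have "\<forall>y\<in>ball p (R p). \<exists>z\<in>\<Gamma>. \<forall>w\<in>\<Gamma>. dist y z \<le> dist y w"
      using RPZ[OF that(1)] by (elim conjE)
    then show ?thesis using that(2) by (rule bspec)
  qed
  have Run: "z = PI p y" if "p \<in> \<Gamma>" "y \<in> ball p (R p)" "z \<in> \<Gamma>" "\<forall>w\<in>\<Gamma>. dist y z \<le> dist y w" for p y z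
  proof -
    have "\<forall>y\<in>ball p (R p). \<forall>z\<in>\<Gamma>. (\<forall>w\<in>\<Gamma>. dist y z \<le> dist y w) \<longrightarrow> z = PI p y"
      using RPZ[OF that(1)] by (elim conjE)
    then show ?thesis using that(2,3,4) by blast
  qed
  have Rnorm: "\<exists>e>0. \<forall>t. \<bar>t\<bar> < e \<longrightarrow> p + t *\<^sub>R n p \<in> ball p (R p) \<and> PI p (p + t *\<^sub>R n p) = p" if "p \<in> \<Gamma>" for p
    using RPZ[OF that] by (elim conjE)
  have cpeq: "cp \<Gamma> y = PI p y" if p: "p \<in> \<Gamma>" and y: "y \<in> ball p (R p)" for p y
  proof -
    obtain z0 where "z0 \<in> \<Gamma>" "\<forall>w\<in>\<Gamma>. dist y z0 \<le> dist y w" using Rex[OF p y] by blast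
    then have ex: "\<exists>z. z \<in> \<Gamma> \<and> (\<forall>w\<in>\<Gamma>. dist y z \<le> dist y w)" by blast
    have "cp \<Gamma> y \<in> \<Gamma> \<and> (\<forall>w\<in>\<Gamma>. dist y (cp \<Gamma> y) \<le> dist y w)"
      unfolding cp_def using someI_ex[OF ex] .
    then show ?thesis using Run[OF p y] by blast
  qed
  define W where "W y = w (cp \<Gamma> y)" for y
  define U where "U = (\<Union>p\<in>\<Gamma>. ball p (R p))"
  have "is_normal_ext \<Gamma> n w W"
    unfolding is_normal_ext_def
  proof (intro exI[of _ U] conjI ballI)
    show "open U" unfolding U_def by auto
    show "\<Gamma> \<subseteq> U"
    proof
      fix x assume x: "x \<in> \<Gamma>"
      have "R x > 0" using R0[OF x] .
      then have "x \<in> ball x (R x)" by simp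
      then show "x \<in> U" unfolding U_def using x by blast
    qed
  next
    fix y assume "y \<in> U"
    then obtain p where p: "p \<in> \<Gamma>" and y: "y \<in> ball p (R p)" unfolding U_def by blast
    have d: "(ZZ p \<circ> PI p) differentiable (at y)"
      using Rd[OF p y] by (intro differentiable_chain_at) auto
    define d0 where "d0 = R p - dist p y"
    have d0: "d0 > 0" using y d0_def by simp
    show "W differentiable (at y)"
    proof (rule differentiable_transform_within[OF d d0])
      fix y' assume "y' \<in> UNIV" "dist y' y < d0"
      then have y': "y' \<in> ball p (R p)" unfolding d0_def using dist_triangle[of p y' y] by (simp add: dist_commute)
      show "(ZZ p \<circ> PI p) y' = W y'" unfolding W_def using cpeq[OF p y'] Rd(4)[OF p y'] by simp
    qed simp
  next
    fix x assume x: "x \<in> \<Gamma>"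
    have ex: "\<exists>z. z \<in> \<Gamma> \<and> (\<forall>w\<in>\<Gamma>. dist x z \<le> dist x w)" using x by (intro exI[of _ x]) auto
    have "cp \<Gamma> x \<in> \<Gamma> \<and> (\<forall>w\<in>\<Gamma>. dist x (cp \<Gamma> x) \<le> dist x w)"
      unfolding cp_def using someI_ex[OF ex] .
    then have "dist x (cp \<Gamma> x) \<le> 0" using x by fastforce
    then have "cp \<Gamma> x = x" by simp
    then show "W x = w x" unfolding W_def by simp
  next
    fix x assume x: "x \<in> \<Gamma>"
    obtain e where e: "e > 0" "\<forall>t. \<bar>t\<bar> < e \<longrightarrow> x + t *\<^sub>R n x \<in> ball x (R x) \<and> PI x (x + t *\<^sub>R n x) = x"
      using Rnorm[OF x] by blast
    show "\<exists>e>0. \<forall>t. \<bar>t\<bar> < e \<longrightarrow> W (x + t *\<^sub>R n x) = w x"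
    proof (intro exI[of _ e] conjI allI impI)
      show "e > 0" using e by simp
      fix t assume "\<bar>t\<bar> < e"
      then have "x + t *\<^sub>R n x \<in> ball x (R x)" "PI x (x + t *\<^sub>R n x) = x" using e by auto
      then show "W (x + t *\<^sub>R n x) = w x" unfolding W_def using cpeq[OF x] by simp
    qed
  qed
  then show ?thesis by blast
qed

lemma grad_nrm:
  assumes surf: "smooth_surface \<Gamma> n"
    and isW: "is_normal_ext \<Gamma> n w W" and x: "x \<in> \<Gamma>"
    and Oo: "open Oo" "x \<in> Oo" and Zd: "Z differentiable (at x)" and ZO: "\<forall>y\<in>\<Gamma>\<inter>Oo. Z y = w y"
  shows "grad W x = grad Z x - (grad Z x \<bullet> n x) *\<^sub>R n x"
proof -
  obtain U where U: "open U" "\<Gamma> \<subseteq> U" "\<forall>y\<in>U. W differentiable (at y)" "\<forall>x\<in>\<Gamma>. W x = w x"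
    "\<forall>x\<in>\<Gamma>. \<exists>e>0. \<forall>t. \<bar>t\<bar> < e \<longrightarrow> W (x + t *\<^sub>R n x) = w x"
    using isW unfolding is_normal_ext_def by blast
  have OU: "open (Oo \<inter> U)" "x \<in> Oo \<inter> U" using Oo U x by auto
  obtain V \<phi> where V: "open V" "x \<in> V" "V \<subseteq> Oo \<inter> U" "Ck 2 \<phi> V" "\<forall>x\<in>V. grad \<phi> x \<noteq> 0"
    "\<Gamma> \<inter> V = {x\<in>V. \<phi> x = 0}" "\<forall>x\<in>\<Gamma> \<inter> V. n x = (1 / norm (grad \<phi> x)) *\<^sub>R grad \<phi> x"
    using chart_sub[OF surf x OU] by blast
  define G where "G = grad \<phi> x"
  have G: "G \<noteq> 0" using V(5) V(2) unfolding G_def by blast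
  have nx: "n x = (1 / norm G) *\<^sub>R G" using V(7) x V(2) unfolding G_def by blast
  have Wd: "W differentiable (at x)" using U(3) U(2) x by blast
  have dW: "(W has_derivative (\<lambda>h. grad W x \<bullet> h)) (at x)" using deriv_grad[OF Wd] .
  have dZ: "(Z has_derivative (\<lambda>h. grad Z x \<bullet> h)) (at x)" using deriv_grad[OF Zd] .
  define d where "d = grad W x - grad Z x"
  have dD: "((\<lambda>y. W y - Z y) has_derivative (\<lambda>h. d \<bullet> h)) (at x)"
    unfolding d_def using has_derivative_diff[OF dW dZ] by (simp add: inner_diff_left)
  have contphi: "continuous_on V \<phi>"
    using Ck2D(1)[OF V(4)] differentiable_imp_continuous_within by (intro continuous_at_imp_continuous_on) blast
  have dphi: "(\<phi> has_derivative (\<lambda>h. G \<bullet> h)) (at x)"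
    unfolding G_def using deriv_grad Ck2D(1)[OF V(4) V(2)] by blast
  have phx: "\<phi> x = 0" using V(6) x V(2) by blast
  have zeroD: "W y - Z y = 0" if "y \<in> \<Gamma>" "y \<in> V" for y
    using that U(4) ZO V(3) by auto
  have tang: "d \<bullet> \<tau> = 0" if "G \<bullet> \<tau> = 0" for \<tau>
  proof (rule tangent_min[OF V(1,2) contphi dphi G phx dD _ that])
    show "\<forall>y\<in>V. \<phi> y = 0 \<longrightarrow> W x - Z x \<le> W y - Z y"
    proof (intro ballI impI)
      fix y assume y: "y \<in> V" "\<phi> y = 0"
      then have "y \<in> \<Gamma>" using V(6) by blast
      then show "W x - Z x \<le> W y - Z y" using zeroD[OF _ y(1)] zeroD[OF x V(2)] by simp
    qed
  qed
  obtain \<mu> where mu: "d = \<mu> *\<^sub>R G" using orth_decomp[OF G tang] by blast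
  obtain e where e: "e > 0" "\<forall>t. \<bar>t\<bar> < e \<longrightarrow> W (x + t *\<^sub>R n x) = w x" using U(5) x by blast
  have dline: "((\<lambda>t. x + t *\<^sub>R n x) has_derivative (\<lambda>s. s *\<^sub>R n x)) (at 0)"
    by (auto intro!: derivative_eq_intros)
  have d1: "((\<lambda>t. W (x + t *\<^sub>R n x)) has_derivative (\<lambda>s. grad W x \<bullet> (s *\<^sub>R n x))) (at 0)"
  proof -
    have dW0: "(W has_derivative (\<lambda>h. grad W x \<bullet> h)) (at (x + 0 *\<^sub>R n x))" using dW by simp
    show ?thesis by (rule has_derivative_compose[OF dline dW0])
  qed
  have d2: "((\<lambda>t. W (x + t *\<^sub>R n x)) has_derivative (\<lambda>s. 0)) (at (0::real))"
  proof (rule has_derivative_transform_within_open[of "\<lambda>t. w x" "\<lambda>s. 0" 0 UNIV "ball 0 e"])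
    show "((\<lambda>t. w x) has_derivative (\<lambda>s. 0)) (at 0)" by simp
    show "open (ball (0::real) e)" by simp
    show "(0::real) \<in> ball 0 e" using e by simp
    fix t :: real assume "t \<in> ball 0 e"
    then show "w x = W (x + t *\<^sub>R n x)" using e by simp
  qed
  have "(\<lambda>s. grad W x \<bullet> (s *\<^sub>R n x)) = (\<lambda>s. 0)" using has_derivative_unique[OF d1 d2] .
  then have Wn: "grad W x \<bullet> n x = 0" by (metis scaleR_one)
  have ng: "norm G > 0" using G by simp
  have Gn: "G = norm G *\<^sub>R n x" using nx ng by simp
  have nn: "n x \<bullet> n x = 1" using nx ng by (simp add: power2_norm_eq_inner[symmetric] divide_simps)
  define k where "k = \<mu> * norm G"
  have dk: "d = k *\<^sub>R n x" unfolding k_def using mu Gn by (metis scaleR_scaleR)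
  have "grad W x = grad Z x + k *\<^sub>R n x" using dk d_def by (simp add: algebra_simps)
  moreover have "k = - (grad Z x \<bullet> n x)"
  proof -
    have "grad W x \<bullet> n x = grad Z x \<bullet> n x + k * (n x \<bullet> n x)"
      using \<open>grad W x = grad Z x + k *\<^sub>R n x\<close> by (simp add: inner_add_left)
    then show ?thesis using Wn nn by simp
  qed
  ultimately show ?thesis by simp
qed

lemma grad_nth: "grad f x $ i = pd i f x" by (simp add: grad_def)

lemma pd_diff:
  assumes "f differentiable (at x)" "g differentiable (at x)"
  shows "pd j (\<lambda>y. f y - g y) x = pd j f x - pd j g x"
proof -
  have "((\<lambda>y. f y - g y) has_derivative (\<lambda>h. grad f x \<bullet> h - grad g x \<bullet> h)) (at x)"
    using has_derivative_diff[OF deriv_grad[OF assms(1)] deriv_grad[OF assms(2)]] .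
  then show ?thesis using pd_from_deriv by (simp add: inner_axis grad_nth)
qed

lemma pd_mult:
  assumes "f differentiable (at x)" "g differentiable (at x)"
  shows "pd j (\<lambda>y. f y * g y) x = pd j f x * g x + f x * pd j g x"
proof -
  have "((\<lambda>y. f y * g y) has_derivative (\<lambda>h. f x * (grad g x \<bullet> h) + (grad f x \<bullet> h) * g x)) (at x)"
    using has_derivative_mult[OF deriv_grad[OF assms(1)] deriv_grad[OF assms(2)]] .
  then show ?thesis using pd_from_deriv by (simp add: inner_axis grad_nth)
qed

lemma nrm_ext_ok:
  assumes surf: "smooth_surface \<Gamma> n"
    and loc: "\<forall>p\<in>\<Gamma>. \<exists>Oo Z. open Oo \<and> p \<in> Oo \<and> (\<forall>y\<in>Oo. Z differentiable (at y)) \<and> (\<forall>y\<in>\<Gamma>\<inter>Oo. Z y = w y)"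
  shows "is_normal_ext \<Gamma> n w (nrm_ext \<Gamma> n w)"
  unfolding nrm_ext_def using normal_ext_exists[OF surf loc] by (rule someI_ex)

lemma sg_formula:
  assumes surf: "smooth_surface \<Gamma> n" and unit: "norm (n x) = 1"
    and loc: "\<forall>p\<in>\<Gamma>. \<exists>Oo Z. open Oo \<and> p \<in> Oo \<and> (\<forall>y\<in>Oo. Z differentiable (at y)) \<and> (\<forall>y\<in>\<Gamma>\<inter>Oo. Z y = w y)"
    and x: "x \<in> \<Gamma>" and Oo: "open Oo" "x \<in> Oo" and Zd: "Z differentiable (at x)" and ZO: "\<forall>y\<in>\<Gamma>\<inter>Oo. Z y = w y"
  shows "grad (nrm_ext \<Gamma> n w) x = grad Z x - (grad Z x \<bullet> n x) *\<^sub>R n x"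
    and "surf_grad \<Gamma> n w x = grad Z x - (grad Z x \<bullet> n x) *\<^sub>R n x"
proof -
  show g: "grad (nrm_ext \<Gamma> n w) x = grad Z x - (grad Z x \<bullet> n x) *\<^sub>R n x"
    by (rule grad_nrm[OF surf nrm_ext_ok[OF surf loc] x Oo Zd ZO])
  have nn: "n x \<bullet> n x = 1" using unit by (simp add: power2_norm_eq_inner[symmetric])
  have "grad (nrm_ext \<Gamma> n w) x \<bullet> n x = 0" unfolding g using nn by (simp add: inner_diff_left)
  then show "surf_grad \<Gamma> n w x = grad Z x - (grad Z x \<bullet> n x) *\<^sub>R n x"
    unfolding surf_grad_def g by simp
qed

lemma n_cont:
  assumes surf: "smooth_surface \<Gamma> n"
  shows "continuous_on \<Gamma> n"
proof -
  have "continuous (at x within \<Gamma>) n" if x: "x \<in> \<Gamma>" for x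
  proof -
    obtain V \<phi> where V: "open V" "x \<in> V" "Ck 2 \<phi> V" "\<forall>x\<in>V. grad \<phi> x \<noteq> 0"
      "\<Gamma> \<inter> V = {x\<in>V. \<phi> x = 0}" "\<forall>x\<in>\<Gamma> \<inter> V. n x = (1 / norm (grad \<phi> x)) *\<^sub>R grad \<phi> x"
      using chart[OF surf x] by blast
    have cG: "continuous_on V (grad \<phi>)" using grad_cont Ck2D(3)[OF V(3)] by blast
    have cN: "continuous_on V (\<lambda>y. (1 / norm (grad \<phi> y)) *\<^sub>R grad \<phi> y)"
      using cG V(4) by (intro continuous_intros) auto
    then have "isCont (\<lambda>y. (1 / norm (grad \<phi> y)) *\<^sub>R grad \<phi> y) x"
      using V(1,2) continuous_on_eq_continuous_at by blast
    then have c: "continuous (at x within \<Gamma>) (\<lambda>y. (1 / norm (grad \<phi> y)) *\<^sub>R grad \<phi> y)"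
      using continuous_at_imp_continuous_within by blast
    obtain d where d: "d > 0" "ball x d \<subseteq> V" using V(1,2) open_contains_ball by blast
    show ?thesis
    proof (rule continuous_transform_within[OF c d(1) x])
      fix x' assume "x' \<in> \<Gamma>" "dist x' x < d"
      then have "x' \<in> \<Gamma> \<inter> V" using d(2) by (auto simp: dist_commute)
      then show "(1 / norm (grad \<phi> x')) *\<^sub>R grad \<phi> x' = n x'" using V(6) by simp
    qed
  qed
  then show ?thesis by (simp add: continuous_on_eq_continuous_within)
qed

lemma LB_alg:
  fixes nn Pq :: "3 \<Rightarrow> real" and PA PN :: "3 \<Rightarrow> 3 \<Rightarrow> real" and q :: real
  assumes "(\<Sum>i\<in>UNIV. nn i * nn i) = 1"
  shows "(\<Sum>i\<in>UNIV. PA i i - (Pq i * nn i + q * PN i i)) - (\<Sum>i\<in>UNIV. (\<Sum>j\<in>UNIV. (PA i j - (Pq j * nn i + q * PN i j)) * nn j) * nn i)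
      = (\<Sum>i\<in>UNIV. PA i i) - (\<Sum>i\<in>UNIV. \<Sum>j\<in>UNIV. nn i * PA i j * nn j) - q * ((\<Sum>i\<in>UNIV. PN i i) - (\<Sum>i\<in>UNIV. \<Sum>j\<in>UNIV. nn i * PN i j * nn j))"
proof -
  have h: "nn 1 * nn 1 + nn 2 * nn 2 + nn 3 * nn 3 = 1" using assms by (simp add: sum_3)
  show ?thesis unfolding sum_3 using h by algebra
qed

lemma MC_alg:
  fixes nn :: "3 \<Rightarrow> real" and PN :: "3 \<Rightarrow> 3 \<Rightarrow> real"
  shows "(\<Sum>i\<in>UNIV. PN i i - (\<Sum>j\<in>UNIV. PN i j * nn j) * nn i) = (\<Sum>i\<in>UNIV. PN i i) - (\<Sum>i\<in>UNIV. \<Sum>j\<in>UNIV. nn i * PN i j * nn j)"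
  unfolding sum_3 by algebra

lemma div_alg:
  fixes nn :: "3 \<Rightarrow> real" and P :: "3 \<Rightarrow> 3 \<Rightarrow> real"
  shows "(\<Sum>i\<in>UNIV. P i i - (\<Sum>j\<in>UNIV. P i j * nn j) * nn i) = (\<Sum>i\<in>UNIV. P i i) - (\<Sum>i\<in>UNIV. \<Sum>j\<in>UNIV. nn i * P i j * nn j)"
  by (rule MC_alg)

lemma N_diff:
  assumes phi: "Ck 2 \<phi> V" and gnz: "\<forall>x\<in>V. grad \<phi> x \<noteq> 0" and y: "y \<in> V"
  shows "(\<lambda>y. (1 / norm (grad \<phi> y)) *\<^sub>R grad \<phi> y) differentiable (at y)"
proof -
  have dG: "grad \<phi> differentiable (at y)"
    using gradG_deriv[of \<phi> y] Ck2D(2)[OF phi y] unfolding differentiable_def by blast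
  have dn: "(\<lambda>y. norm (grad \<phi> y)) differentiable (at y)"
    using differentiable_chain_at[OF dG differentiable_norm_at[of "grad \<phi> y"]] gnz y by (simp add: o_def)
  have "(\<lambda>y. 1 / norm (grad \<phi> y)) differentiable (at y)"
    using dn gnz y by (intro differentiable_divide) auto
  then show ?thesis using dG by (intro differentiable_scaleR)
qed

lemma comp_diff:
  fixes N :: "R3 \<Rightarrow> R3"
  assumes "N differentiable (at y)"
  shows "(\<lambda>y. N y $ i) differentiable (at y)"
proof -
  have "(\<lambda>y. N y \<bullet> axis i 1) differentiable (at y)" using assms by simp
  then show ?thesis by (simp add: inner_axis)
qed

lemma gradf_diff:
  assumes "Ck 2 f U" "y \<in> U"
  shows "grad f differentiable (at y)"
  using gradG_deriv[of f y] Ck2D(2)[OF assms] unfolding differentiable_def by blast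

lemma inner3: "(a::R3) \<bullet> b = (\<Sum>i\<in>UNIV. a $ i * b $ i)"
  by (simp add: inner_vec_def)

lemma SGu_lemma:
  assumes surf: "smooth_surface \<Gamma> n" and unit: "\<forall>x\<in>\<Gamma>. norm (n x) = 1"
    and U: "open U" "\<Gamma> \<subseteq> U" and utd: "\<forall>y\<in>U. ut differentiable (at y)" and ut: "\<forall>x\<in>\<Gamma>. ut x = u x"
    and x: "x \<in> \<Gamma>"
  shows "surf_grad \<Gamma> n u x = grad ut x - (grad ut x \<bullet> n x) *\<^sub>R n x"
proof -
  have locu: "\<forall>p\<in>\<Gamma>. \<exists>Oo Z. open Oo \<and> p \<in> Oo \<and> (\<forall>y\<in>Oo. Z differentiable (at y)) \<and> (\<forall>y\<in>\<Gamma>\<inter>Oo. Z y = u y)"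
    using U utd ut by blast
  show ?thesis
    using sg_formula(2)[OF surf _ locu x U(1) _ _ ] unit x U(2) utd ut by blast
qed

lemma LB_point:
  assumes surf: "smooth_surface \<Gamma> n" and unit: "\<forall>x\<in>\<Gamma>. norm (n x) = 1"
    and U: "open U" "\<Gamma> \<subseteq> U" and ut2: "Ck 2 ut U" and ut: "\<forall>x\<in>\<Gamma>. ut x = u x"
    and x: "x \<in> \<Gamma>"
  shows "lap_beltrami \<Gamma> n u x = lap ut x - hess_form ut (n x) x + 2 * mean_curv \<Gamma> n x * (n x \<bullet> grad ut x)"
proof -
  have utd: "\<forall>y\<in>U. ut differentiable (at y)" using Ck2D(1)[OF ut2] by blast
  have SGu: "surf_grad \<Gamma> n u y = grad ut y - (grad ut y \<bullet> n y) *\<^sub>R n y" if "y \<in> \<Gamma>" for y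
    by (rule SGu_lemma[OF surf unit U utd ut that])
  have chartU: "\<exists>V \<phi>. open V \<and> p \<in> V \<and> V \<subseteq> U \<and> Ck 2 \<phi> V \<and> (\<forall>x\<in>V. grad \<phi> x \<noteq> 0) \<and>
      (\<forall>y\<in>\<Gamma> \<inter> V. n y = (1 / norm (grad \<phi> y)) *\<^sub>R grad \<phi> y)" if p: "p \<in> \<Gamma>" for p
  proof -
    have "p \<in> U" using p U by blast
    then obtain V \<phi> where V: "open V" "p \<in> V" "V \<subseteq> U" "Ck 2 \<phi> V" "\<forall>x\<in>V. grad \<phi> x \<noteq> 0"
      "\<Gamma> \<inter> V = {x\<in>V. \<phi> x = 0}" "\<forall>x\<in>\<Gamma> \<inter> V. n x = (1 / norm (grad \<phi> x)) *\<^sub>R grad \<phi> x"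
      using chart_sub[OF surf p U(1)] by blast
    then show ?thesis by blast
  qed
  define Nf where "Nf \<phi> y = (1 / norm (grad \<phi> y)) *\<^sub>R grad \<phi> y" for \<phi> :: "R3 \<Rightarrow> real" and y
  define Zf where "Zf \<phi> i y = pd i ut y - (grad ut y \<bullet> Nf \<phi> y) * Nf \<phi> y $ i" for \<phi> :: "R3 \<Rightarrow> real" and i y
  have Zf_diff: "Zf \<phi> i differentiable (at y)" and Nf_diff: "(\<lambda>y. Nf \<phi> y $ i) differentiable (at y)"
    and q_diff: "(\<lambda>y. grad ut y \<bullet> Nf \<phi> y) differentiable (at y)"
    if "V \<subseteq> U" "Ck 2 \<phi> V" "\<forall>x\<in>V. grad \<phi> x \<noteq> 0" "y \<in> V" for V \<phi> i y
  proof -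
    have yU: "y \<in> U" using that by blast
    have N: "Nf \<phi> differentiable (at y)" unfolding Nf_def[abs_def] using N_diff[OF that(2,3,4)] .
    show Ni: "(\<lambda>y. Nf \<phi> y $ i) differentiable (at y)" using comp_diff[OF N] .
    have gu: "grad ut differentiable (at y)" using gradf_diff[OF ut2 yU] .
    show q: "(\<lambda>y. grad ut y \<bullet> Nf \<phi> y) differentiable (at y)" by (rule differentiable_inner[OF gu N])
    have pu: "pd i ut differentiable (at y)" using Ck2D(2)[OF ut2 yU] .
    show "Zf \<phi> i differentiable (at y)" unfolding Zf_def[abs_def] by (rule differentiable_diff[OF pu differentiable_mult[OF q Ni]])
  qed
  have locN: "\<forall>p\<in>\<Gamma>. \<exists>Oo Z. open Oo \<and> p \<in> Oo \<and> (\<forall>y\<in>Oo. Z differentiable (at y)) \<and> (\<forall>y\<in>\<Gamma>\<inter>Oo. Z y = n y $ i)" for i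
  proof (rule ballI)
    fix p assume p: "p \<in> \<Gamma>"
    have "True" by simp
    obtain V \<phi> where V: "open V" "p \<in> V" "V \<subseteq> U" "Ck 2 \<phi> V" "\<forall>x\<in>V. grad \<phi> x \<noteq> 0"
      "\<forall>y\<in>\<Gamma> \<inter> V. n y = (1 / norm (grad \<phi> y)) *\<^sub>R grad \<phi> y" using chartU[OF p] by blast
    show "\<exists>Oo Z. open Oo \<and> p \<in> Oo \<and> (\<forall>y\<in>Oo. Z differentiable (at y)) \<and> (\<forall>y\<in>\<Gamma>\<inter>Oo. Z y = n y $ i)"
    proof (intro exI[of _ V] exI[of _ "\<lambda>y. Nf \<phi> y $ i"] conjI)
      show "open V" "p \<in> V" using V by auto
      show "\<forall>y\<in>V. (\<lambda>y. Nf \<phi> y $ i) differentiable (at y)" using Nf_diff[OF V(3,4,5)] by blast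
      show "\<forall>y\<in>\<Gamma> \<inter> V. Nf \<phi> y $ i = n y $ i" using V(6) unfolding Nf_def by simp
    qed
  qed
  have locS: "\<forall>p\<in>\<Gamma>. \<exists>Oo Z. open Oo \<and> p \<in> Oo \<and> (\<forall>y\<in>Oo. Z differentiable (at y)) \<and> (\<forall>y\<in>\<Gamma>\<inter>Oo. Z y = surf_grad \<Gamma> n u y $ i)" for i
  proof (rule ballI)
    fix p assume p: "p \<in> \<Gamma>"
    obtain V \<phi> where V: "open V" "p \<in> V" "V \<subseteq> U" "Ck 2 \<phi> V" "\<forall>x\<in>V. grad \<phi> x \<noteq> 0"
      "\<forall>y\<in>\<Gamma> \<inter> V. n y = (1 / norm (grad \<phi> y)) *\<^sub>R grad \<phi> y" using chartU[OF p] by blast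
    have eq: "Zf \<phi> i y = surf_grad \<Gamma> n u y $ i" if "y \<in> \<Gamma> \<inter> V" for y
    proof -
      have "n y = Nf \<phi> y" using V(6) that unfolding Nf_def by blast
      then show ?thesis unfolding Zf_def using SGu[of y] that by (simp add: grad_nth)
    qed
    show "\<exists>Oo Z. open Oo \<and> p \<in> Oo \<and> (\<forall>y\<in>Oo. Z differentiable (at y)) \<and> (\<forall>y\<in>\<Gamma>\<inter>Oo. Z y = surf_grad \<Gamma> n u y $ i)"
    proof (intro exI[of _ V] exI[of _ "Zf \<phi> i"] conjI)
      show "open V" "p \<in> V" using V by auto
      show "\<forall>y\<in>V. Zf \<phi> i differentiable (at y)" using Zf_diff[OF V(3,4,5)] by blast
      show "\<forall>y\<in>\<Gamma> \<inter> V. Zf \<phi> i y = surf_grad \<Gamma> n u y $ i" using eq by blast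
    qed
  qed
  obtain V \<phi> where V: "open V" "x \<in> V" "V \<subseteq> U" "Ck 2 \<phi> V" "\<forall>x\<in>V. grad \<phi> x \<noteq> 0"
      "\<forall>y\<in>\<Gamma> \<inter> V. n y = (1 / norm (grad \<phi> y)) *\<^sub>R grad \<phi> y" using chartU[OF x] by blast
  have Nx: "Nf \<phi> x = n x" using V(6) x V(2) unfolding Nf_def by auto
  have xU: "x \<in> U" using V by blast
  define nn where "nn i = n x $ i" for i
  define qf where "qf y = grad ut y \<bullet> Nf \<phi> y" for y
  define PA where "PA i j = pd j (pd i ut) x" for i j
  define Pq where "Pq j = pd j qf x" for j
  define PN where "PN i j = pd j (\<lambda>y. Nf \<phi> y $ i) x" for i j
  have qx: "qf x = n x \<bullet> grad ut x" unfolding qf_def Nx by (simp add: inner_commute)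
  have nn1: "(\<Sum>i\<in>UNIV. nn i * nn i) = 1"
    using unit x unfolding nn_def by (simp add: inner3[symmetric] power2_norm_eq_inner[symmetric])
  have pdZ: "pd j (Zf \<phi> i) x = PA i j - (Pq j * nn i + qf x * PN i j)" for i j
  proof -
    have d1: "pd i ut differentiable (at x)" using Ck2D(2)[OF ut2 xU] .
    have d2: "qf differentiable (at x)" unfolding qf_def[abs_def] using q_diff[OF V(3,4,5,2)] .
    have d3: "(\<lambda>y. Nf \<phi> y $ i) differentiable (at x)" using Nf_diff[OF V(3,4,5,2)] .
    have d4: "(\<lambda>y. qf y * Nf \<phi> y $ i) differentiable (at x)" by (rule differentiable_mult[OF d2 d3])
    have "Zf \<phi> i = (\<lambda>y. pd i ut y - qf y * Nf \<phi> y $ i)" unfolding Zf_def[abs_def] qf_def by simp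
    then have "pd j (Zf \<phi> i) x = pd j (pd i ut) x - pd j (\<lambda>y. qf y * Nf \<phi> y $ i) x"
      using pd_diff[OF d1 d4] by simp
    also have "pd j (\<lambda>y. qf y * Nf \<phi> y $ i) x = pd j qf x * Nf \<phi> x $ i + qf x * pd j (\<lambda>y. Nf \<phi> y $ i) x"
      using pd_mult[OF d2 d3] .
    finally show ?thesis unfolding PA_def Pq_def PN_def nn_def Nx .
  qed
  have SGS: "surf_grad \<Gamma> n (\<lambda>y. surf_grad \<Gamma> n u y $ i) x = grad (Zf \<phi> i) x - (grad (Zf \<phi> i) x \<bullet> n x) *\<^sub>R n x" for i
  proof (rule sg_formula(2)[OF surf _ locS x V(1,2)])
    show "norm (n x) = 1" using unit x by blast
    show "Zf \<phi> i differentiable (at x)" using Zf_diff[OF V(3,4,5,2)] .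
    show "\<forall>y\<in>\<Gamma> \<inter> V. Zf \<phi> i y = surf_grad \<Gamma> n u y $ i"
    proof
      fix y assume y: "y \<in> \<Gamma> \<inter> V"
      have "n y = Nf \<phi> y" using V(6) y unfolding Nf_def by blast
      then show "Zf \<phi> i y = surf_grad \<Gamma> n u y $ i" unfolding Zf_def using SGu[of y] y by (simp add: grad_nth)
    qed
  qed
  have GN: "grad (nrm_ext \<Gamma> n (\<lambda>y. n y $ i)) x = grad (\<lambda>y. Nf \<phi> y $ i) x - (grad (\<lambda>y. Nf \<phi> y $ i) x \<bullet> n x) *\<^sub>R n x" for i
  proof (rule sg_formula(1)[OF surf _ locN x V(1,2)])
    show "norm (n x) = 1" using unit x by blast
    show "(\<lambda>y. Nf \<phi> y $ i) differentiable (at x)" using Nf_diff[OF V(3,4,5,2)] .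
    show "\<forall>y\<in>\<Gamma> \<inter> V. Nf \<phi> y $ i = n y $ i" using V(6) unfolding Nf_def by auto
  qed
  have LB: "lap_beltrami \<Gamma> n u x = (\<Sum>i\<in>UNIV. PA i i - (Pq i * nn i + qf x * PN i i)) - (\<Sum>i\<in>UNIV. (\<Sum>j\<in>UNIV. (PA i j - (Pq j * nn i + qf x * PN i j)) * nn j) * nn i)"
  proof -
    have "lap_beltrami \<Gamma> n u x = (\<Sum>i\<in>UNIV. (grad (Zf \<phi> i) x - (grad (Zf \<phi> i) x \<bullet> n x) *\<^sub>R n x) $ i)"
      unfolding lap_beltrami_def surf_div_def SGS ..
    also have "\<dots> = (\<Sum>i\<in>UNIV. pd i (Zf \<phi> i) x - (\<Sum>j\<in>UNIV. pd j (Zf \<phi> i) x * nn j) * nn i)"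
      unfolding inner3 nn_def by (simp add: grad_nth)
    also have "\<dots> = (\<Sum>i\<in>UNIV. PA i i - (Pq i * nn i + qf x * PN i i)) - (\<Sum>i\<in>UNIV. (\<Sum>j\<in>UNIV. (PA i j - (Pq j * nn i + qf x * PN i j)) * nn j) * nn i)"
      unfolding pdZ by (simp add: sum_subtractf)
    finally show ?thesis .
  qed
  have MC: "mean_curv \<Gamma> n x = - (1/2) * ((\<Sum>i\<in>UNIV. PN i i) - (\<Sum>i\<in>UNIV. \<Sum>j\<in>UNIV. nn i * PN i j * nn j))"
  proof -
    have "(\<Sum>i\<in>UNIV. pd i (nrm_ext \<Gamma> n (\<lambda>y. n y $ i)) x) = (\<Sum>i\<in>UNIV. PN i i - (\<Sum>j\<in>UNIV. PN i j * nn j) * nn i)"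
      unfolding grad_nth[symmetric] GN PN_def nn_def inner3 by (simp add: grad_nth)
    also have "\<dots> = (\<Sum>i\<in>UNIV. PN i i) - (\<Sum>i\<in>UNIV. \<Sum>j\<in>UNIV. nn i * PN i j * nn j)" by (rule MC_alg)
    finally show ?thesis unfolding mean_curv_def by simp
  qed
  have lapx: "lap ut x = (\<Sum>i\<in>UNIV. PA i i)" unfolding lap_def PA_def ..
  have hx: "hess_form ut (n x) x = (\<Sum>i\<in>UNIV. \<Sum>j\<in>UNIV. nn i * PA i j * nn j)" unfolding hess_form_def PA_def nn_def ..
  show ?thesis
    unfolding LB LB_alg[OF nn1] MC lapx hx qx[symmetric] by (simp add: algebra_simps)
qed

lemma ennreal_final:
  fixes a b d :: ennreal and c :: real
  assumes "1 \<le> c"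
  shows "a + (ennreal c * b + d) \<le> ennreal c * (a + b + d)"
proof -
  have c1: "(1::ennreal) \<le> ennreal c" using assms by simp
  have "a \<le> ennreal c * a" using mult_right_mono[OF c1, of a] by simp
  moreover have "d \<le> ennreal c * d" using mult_right_mono[OF c1, of d] by simp
  ultimately have "a + (ennreal c * b + d) \<le> ennreal c * a + (ennreal c * b + ennreal c * d)"
    by (intro add_mono) auto
  also have "\<dots> = ennreal c * (a + b + d)" by (simp add: distrib_left add.assoc)
  finally show ?thesis .
qed

theorem theorem2p1:
  fixes \<Gamma> U :: "R3 set" and n v f vt :: "R3 \<Rightarrow> R3" and u g ut :: "R3 \<Rightarrow> real"
  assumes surf: "smooth_surface \<Gamma> n"
    and unit: "\<forall>x\<in>\<Gamma>. norm (n x) = 1"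
    and Hbdd: "bounded ((\<lambda>x. mean_curv \<Gamma> n x) ` \<Gamma>)"
    and U: "open U" "\<Gamma> \<subseteq> U"
    and ut: "Ck 2 ut U" "\<forall>x\<in>\<Gamma>. ut x = u x"
    and vt: "\<forall>i. Ck 1 (\<lambda>y. vt y $ i) U" "\<forall>x\<in>\<Gamma>. vt x = v x"
  shows "(L2norm \<Gamma> (\<lambda>x. surf_grad \<Gamma> n u x - f x)
           \<le> L2norm \<Gamma> (\<lambda>x. grad ut x - f x) + L2norm \<Gamma> (\<lambda>x. n x \<bullet> grad ut x))
     \<and> (L2norm \<Gamma> (\<lambda>x. surf_div \<Gamma> n v x - g x)
           \<le> L2norm \<Gamma> (\<lambda>x. divg vt x - g x) + L2norm \<Gamma> (\<lambda>x. jac_form vt (n x) x))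
     \<and> (L2norm \<Gamma> (\<lambda>x. lap_beltrami \<Gamma> n u x - g x)
           \<le> ennreal (max 1 (2 * (SUP x\<in>\<Gamma>. \<bar>mean_curv \<Gamma> n x\<bar>)))
              * (L2norm \<Gamma> (\<lambda>x. lap ut x - g x) + L2norm \<Gamma> (\<lambda>x. n x \<bullet> grad ut x)
                 + L2norm \<Gamma> (\<lambda>x. hess_form ut (n x) x)))"
proof -
  have ncont: "continuous_on \<Gamma> n" by (rule n_cont[OF surf])
  have cn: "continuous_on \<Gamma> (\<lambda>x. n x $ i)" for i using continuous_on_component[OF ncont] .
  have utd: "\<forall>y\<in>U. ut differentiable (at y)" using Ck2D(1)[OF ut(1)] by blast
  have cgu: "continuous_on \<Gamma> (grad ut)"
    using continuous_on_subset[OF grad_cont[OF Ck2D(3)[OF ut(1)]] U(2)] .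
  have cq: "continuous_on \<Gamma> (\<lambda>x. n x \<bullet> grad ut x)" using ncont cgu by (intro continuous_intros)
  have SGu: "surf_grad \<Gamma> n u x = grad ut x - (grad ut x \<bullet> n x) *\<^sub>R n x" if "x \<in> \<Gamma>" for x
    by (rule SGu_lemma[OF surf unit U utd ut(2) that])
  have P1: "L2norm \<Gamma> (\<lambda>x. surf_grad \<Gamma> n u x - f x)
           \<le> L2norm \<Gamma> (\<lambda>x. grad ut x - f x) + L2norm \<Gamma> (\<lambda>x. n x \<bullet> grad ut x)"
  proof (rule L2_tri)
    show "\<forall>x\<in>\<Gamma>. norm (surf_grad \<Gamma> n u x - f x) \<le> norm (grad ut x - f x) + norm (n x \<bullet> grad ut x)"
    proof
      fix x assume x: "x \<in> \<Gamma>"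
      have e: "surf_grad \<Gamma> n u x - f x = (grad ut x - f x) - (n x \<bullet> grad ut x) *\<^sub>R n x"
        using SGu[OF x] by (simp add: inner_commute algebra_simps)
      have "norm (surf_grad \<Gamma> n u x - f x) \<le> norm (grad ut x - f x) + norm ((n x \<bullet> grad ut x) *\<^sub>R n x)"
        unfolding e by (rule norm_triangle_ineq4)
      also have "norm ((n x \<bullet> grad ut x) *\<^sub>R n x) = norm (n x \<bullet> grad ut x)" using unit x by simp
      finally show "norm (surf_grad \<Gamma> n u x - f x) \<le> norm (grad ut x - f x) + norm (n x \<bullet> grad ut x)" .
    qed
    show "(\<lambda>x. norm (n x \<bullet> grad ut x)) \<in> borel_measurable (surface_measure \<Gamma>)"
      by (rule cont_meas[OF continuous_on_norm[OF cq]])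
  qed
  have vtd: "(\<lambda>y. vt y $ i) differentiable (at y)" if "y \<in> U" for i y
    using Ck1D(1)[OF vt(1)[rule_format, of i] that] .
  have cpv: "continuous_on \<Gamma> (pd j (\<lambda>y. vt y $ i))" for i j
    using continuous_on_subset[OF Ck1D(2)[OF vt(1)[rule_format, of i]] U(2)] .
  have locv: "\<forall>p\<in>\<Gamma>. \<exists>Oo Z. open Oo \<and> p \<in> Oo \<and> (\<forall>y\<in>Oo. Z differentiable (at y)) \<and> (\<forall>y\<in>\<Gamma>\<inter>Oo. Z y = v y $ i)" for i
  proof (rule ballI)
    fix p assume p: "p \<in> \<Gamma>"
    show "\<exists>Oo Z. open Oo \<and> p \<in> Oo \<and> (\<forall>y\<in>Oo. Z differentiable (at y)) \<and> (\<forall>y\<in>\<Gamma>\<inter>Oo. Z y = v y $ i)"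
    proof (intro exI[of _ U] exI[of _ "\<lambda>y. vt y $ i"] conjI)
      show "open U" "p \<in> U" using U p by auto
      show "\<forall>y\<in>U. (\<lambda>y. vt y $ i) differentiable (at y)" using vtd by blast
      show "\<forall>y\<in>\<Gamma> \<inter> U. vt y $ i = v y $ i" using vt(2) by simp
    qed
  qed
  have SD: "surf_div \<Gamma> n v x = divg vt x - jac_form vt (n x) x" if x: "x \<in> \<Gamma>" for x
  proof -
    have xU: "x \<in> U" using x U by blast
    have SGv: "surf_grad \<Gamma> n (\<lambda>y. v y $ i) x = grad (\<lambda>y. vt y $ i) x - (grad (\<lambda>y. vt y $ i) x \<bullet> n x) *\<^sub>R n x" for i
    proof (rule sg_formula(2)[OF surf _ locv x U(1) xU vtd[OF xU]])
      show "norm (n x) = 1" using unit x by blast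
      show "\<forall>y\<in>\<Gamma> \<inter> U. vt y $ i = v y $ i" using vt(2) by simp
    qed
    have "surf_div \<Gamma> n v x = (\<Sum>i\<in>UNIV. pd i (\<lambda>y. vt y $ i) x - (\<Sum>j\<in>UNIV. pd j (\<lambda>y. vt y $ i) x * n x $ j) * n x $ i)"
      unfolding surf_div_def SGv inner3 by (simp add: grad_nth)
    also have "\<dots> = (\<Sum>i\<in>UNIV. pd i (\<lambda>y. vt y $ i) x) - (\<Sum>i\<in>UNIV. \<Sum>j\<in>UNIV. n x $ i * pd j (\<lambda>y. vt y $ i) x * n x $ j)"
      by (rule div_alg[where P="\<lambda>i j. pd j (\<lambda>y. vt y $ i) x" and nn="\<lambda>i. n x $ i"])
    finally show ?thesis unfolding divg_def jac_form_def .
  qed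
  have cjac: "continuous_on \<Gamma> (\<lambda>x. jac_form vt (n x) x)"
    unfolding jac_form_def by (intro continuous_intros cpv cn)
  have P2: "L2norm \<Gamma> (\<lambda>x. surf_div \<Gamma> n v x - g x)
           \<le> L2norm \<Gamma> (\<lambda>x. divg vt x - g x) + L2norm \<Gamma> (\<lambda>x. jac_form vt (n x) x)"
  proof (rule L2_tri)
    show "\<forall>x\<in>\<Gamma>. norm (surf_div \<Gamma> n v x - g x) \<le> norm (divg vt x - g x) + norm (jac_form vt (n x) x)"
    proof
      fix x assume x: "x \<in> \<Gamma>"
      have e: "surf_div \<Gamma> n v x - g x = (divg vt x - g x) - jac_form vt (n x) x" using SD[OF x] by simp
      show "norm (surf_div \<Gamma> n v x - g x) \<le> norm (divg vt x - g x) + norm (jac_form vt (n x) x)"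
        unfolding e by (rule norm_triangle_ineq4)
    qed
    show "(\<lambda>x. norm (jac_form vt (n x) x)) \<in> borel_measurable (surface_measure \<Gamma>)"
      by (rule cont_meas[OF continuous_on_norm[OF cjac]])
  qed
  define S where "S = (SUP x\<in>\<Gamma>. \<bar>mean_curv \<Gamma> n x\<bar>)"
  define c where "c = max 1 (2 * S)"
  have c1: "1 \<le> c" unfolding c_def by simp
  obtain B where B: "\<forall>y\<in>(\<lambda>x. mean_curv \<Gamma> n x) ` \<Gamma>. norm y \<le> B" using Hbdd unfolding bounded_iff by blast
  have bdd: "bdd_above ((\<lambda>x. \<bar>mean_curv \<Gamma> n x\<bar>) ` \<Gamma>)"
    using B by (intro bdd_aboveI2[of _ _ B]) auto
  have Hle: "2 * \<bar>mean_curv \<Gamma> n x\<bar> \<le> c" if x: "x \<in> \<Gamma>" for x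
  proof -
    have "\<bar>mean_curv \<Gamma> n x\<bar> \<le> S" unfolding S_def by (rule cSUP_upper[OF x bdd])
    then show ?thesis unfolding c_def by simp
  qed
  have cpu: "continuous_on \<Gamma> (pd j (pd i ut))" for i j
    using continuous_on_subset[OF Ck2D(4)[OF ut(1)] U(2)] .
  have chess: "continuous_on \<Gamma> (\<lambda>x. hess_form ut (n x) x)"
    unfolding hess_form_def by (intro continuous_intros cpu cn)
  define M where "M x = c * \<bar>n x \<bullet> grad ut x\<bar> + \<bar>hess_form ut (n x) x\<bar>" for x
  have cM: "continuous_on \<Gamma> M" unfolding M_def using cq chess ncont cgu by (intro continuous_intros)
  have M0: "0 \<le> M x" for x unfolding M_def using c1 by simp
  have step1: "L2norm \<Gamma> (\<lambda>x. lap_beltrami \<Gamma> n u x - g x) \<le> L2norm \<Gamma> (\<lambda>x. lap ut x - g x) + L2norm \<Gamma> M"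
  proof (rule L2_tri)
    show "\<forall>x\<in>\<Gamma>. norm (lap_beltrami \<Gamma> n u x - g x) \<le> norm (lap ut x - g x) + norm (M x)"
    proof
      fix x assume x: "x \<in> \<Gamma>"
      have eq: "lap_beltrami \<Gamma> n u x - g x = (lap ut x - g x) - hess_form ut (n x) x + 2 * mean_curv \<Gamma> n x * (n x \<bullet> grad ut x)"
        using LB_point[OF surf unit U ut x] by simp
      have "\<bar>2 * mean_curv \<Gamma> n x * (n x \<bullet> grad ut x)\<bar> = (2 * \<bar>mean_curv \<Gamma> n x\<bar>) * \<bar>n x \<bullet> grad ut x\<bar>"
        by (simp add: abs_mult)
      also have "\<dots> \<le> c * \<bar>n x \<bullet> grad ut x\<bar>" using Hle[OF x] by (rule mult_right_mono) simp
      finally have h: "\<bar>2 * mean_curv \<Gamma> n x * (n x \<bullet> grad ut x)\<bar> \<le> c * \<bar>n x \<bullet> grad ut x\<bar>" .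
      have "\<bar>lap_beltrami \<Gamma> n u x - g x\<bar> \<le> \<bar>lap ut x - g x\<bar> + \<bar>hess_form ut (n x) x\<bar> + \<bar>2 * mean_curv \<Gamma> n x * (n x \<bullet> grad ut x)\<bar>"
        unfolding eq by linarith
      also have "\<dots> \<le> \<bar>lap ut x - g x\<bar> + M x" unfolding M_def using h by linarith
      finally show "norm (lap_beltrami \<Gamma> n u x - g x) \<le> norm (lap ut x - g x) + norm (M x)"
        using M0[of x] by simp
    qed
    show "(\<lambda>x. norm (M x)) \<in> borel_measurable (surface_measure \<Gamma>)"
      by (rule cont_meas[OF continuous_on_norm[OF cM]])
  qed
  have step2: "L2norm \<Gamma> M \<le> L2norm \<Gamma> (\<lambda>x. c * (n x \<bullet> grad ut x)) + L2norm \<Gamma> (\<lambda>x. hess_form ut (n x) x)"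
  proof (rule L2_tri)
    show "\<forall>x\<in>\<Gamma>. norm (M x) \<le> norm (c * (n x \<bullet> grad ut x)) + norm (hess_form ut (n x) x)"
      unfolding M_def using c1 by (simp add: abs_mult)
    show "(\<lambda>x. norm (hess_form ut (n x) x)) \<in> borel_measurable (surface_measure \<Gamma>)"
      by (rule cont_meas[OF continuous_on_norm[OF chess]])
  qed
  have step3: "L2norm \<Gamma> (\<lambda>x. c * (n x \<bullet> grad ut x)) = ennreal c * L2norm \<Gamma> (\<lambda>x. n x \<bullet> grad ut x)"
    by (rule L2_scale) (use c1 in simp, rule cont_meas[OF continuous_on_norm[OF cq]])
  have P3: "L2norm \<Gamma> (\<lambda>x. lap_beltrami \<Gamma> n u x - g x)
           \<le> ennreal c * (L2norm \<Gamma> (\<lambda>x. lap ut x - g x) + L2norm \<Gamma> (\<lambda>x. n x \<bullet> grad ut x)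
                 + L2norm \<Gamma> (\<lambda>x. hess_form ut (n x) x))"
  proof -
    have "L2norm \<Gamma> (\<lambda>x. lap_beltrami \<Gamma> n u x - g x)
        \<le> L2norm \<Gamma> (\<lambda>x. lap ut x - g x) + (ennreal c * L2norm \<Gamma> (\<lambda>x. n x \<bullet> grad ut x) + L2norm \<Gamma> (\<lambda>x. hess_form ut (n x) x))"
    proof -
      have "L2norm \<Gamma> M \<le> ennreal c * L2norm \<Gamma> (\<lambda>x. n x \<bullet> grad ut x) + L2norm \<Gamma> (\<lambda>x. hess_form ut (n x) x)"
        using step2 unfolding step3 .
      then have "L2norm \<Gamma> (\<lambda>x. lap ut x - g x) + L2norm \<Gamma> M \<le> L2norm \<Gamma> (\<lambda>x. lap ut x - g x) + (ennreal c * L2norm \<Gamma> (\<lambda>x. n x \<bullet> grad ut x) + L2norm \<Gamma> (\<lambda>x. hess_form ut (n x) x))"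
        by (rule add_left_mono)
      with step1 show ?thesis by (rule order_trans)
    qed
    also have "\<dots> \<le> ennreal c * (L2norm \<Gamma> (\<lambda>x. lap ut x - g x) + L2norm \<Gamma> (\<lambda>x. n x \<bullet> grad ut x)
                 + L2norm \<Gamma> (\<lambda>x. hess_form ut (n x) x))"
      by (rule ennreal_final[OF c1])
    finally show ?thesis .
  qed
  show ?thesis using P1 P2 P3 unfolding c_def S_def by blast
qed

end
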